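(* Let $\mathbb{K}$ be a positive commutative monoid that has the transportation property. For every hypergraph $H$, $H$ is acyclic if and only if $H$ has the local-to-global consistency property for $\mathbb{K}$-relations.
   Context: A commutative monoid $\mathbb{K}=(K,+,0)$ is positive if $p+q=0$ implies $p=q=0$; monoids have at least two elements. $\mathbb{K}$ has the transportation property if for all positive integers $m,n$ and $b\in K^m$, $c\in K^n$ with $b_1+\dots+b_m=c_1+\dots+c_n$ there is $(d_{ij})\in K^{m\times n}$ with row sums $b_i$ and column sums $c_j$. Attributes have domains (arbitrary sets, chosen as needed); for a finite attribute set $X$, an $X$-tuple assigns each attribute a value in its domain; $t[Y]$ is restriction. A $\mathbb{K}$-relation over $X$ is a finitely supported function $R$ from $X$-tuples to $K$; marginals $R[Y](t)=\sum_{r:R(r)\ne0,r[Y]=t}R(r)$. A hypergraph with hyperedges $X_1,\dots,X_m$ (vertices as attributes) has the local-to-global consistency property for $\mathbb{K}$-relations if every collection $R_1(X_1),\dots,R_m(X_m)$ that is pairwise consistent (for all $i,j$ some $W$ over $X_i\cup X_j$ has $W[X_i]=R_i,W[X_j]=R_j$) is globally consistent (some $W$ over $\bigcup_i X_i$ has $W[X_i]=R_i$ for all $i$). A hypergraph is acyclic (Beeri–Fagin–Maier–Yannakakis) iff it has a join tree: a tree on its hyperedges such that for each vertex the hyperedges containing it form a connected subtree. *)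

theory Defs
  imports Main
begin

definition positive_monoid :: "'k::comm_monoid_add itself \<Rightarrow> bool" where
  "positive_monoid _ \<longleftrightarrow> (\<forall>p q :: 'k. p + q = 0 \<longrightarrow> p = 0 \<and> q = 0)"

definition nontrivial_monoid :: "'k::comm_monoid_add itself \<Rightarrow> bool" where
  "nontrivial_monoid _ \<longleftrightarrow> (\<exists>x y :: 'k. x \<noteq> y)"

definition transportation_property :: "'k::comm_monoid_add itself \<Rightarrow> bool" where
  "transportation_property _ \<longleftrightarrow>
     (\<forall>m n. 0 < m \<longrightarrow> 0 < n \<longrightarrow>
        (\<forall>(b :: nat \<Rightarrow> 'k) (c :: nat \<Rightarrow> 'k).
           (\<Sum>i<m. b i) = (\<Sum>j<n. c j) \<longrightarrow>
           (\<exists>d :: nat \<Rightarrow> nat \<Rightarrow> 'k.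
              (\<forall>i<m. (\<Sum>j<n. d i j) = b i) \<and> (\<forall>j<n. (\<Sum>i<m. d i j) = c j))))"

text \<open>Attributes have type 'a, all values live in one universe type 'v.
  An X-tuple is a partial map with domain exactly X; restriction is map restriction.\<close>

definition is_krel :: "'a set \<Rightarrow> (('a \<rightharpoonup> 'v) \<Rightarrow> 'k::comm_monoid_add) \<Rightarrow> bool" where
  "is_krel X R \<longleftrightarrow> finite {t. R t \<noteq> 0} \<and> (\<forall>t. R t \<noteq> 0 \<longrightarrow> dom t = X)"

definition marginal :: "(('a \<rightharpoonup> 'v) \<Rightarrow> 'k::comm_monoid_add) \<Rightarrow> 'a set \<Rightarrow> ('a \<rightharpoonup> 'v) \<Rightarrow> 'k" where
  "marginal R Y t = (\<Sum>r\<in>{r. R r \<noteq> 0 \<and> r |` Y = t}. R r)"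

definition pairwise_consistent ::
  "'a set set \<Rightarrow> ('a set \<Rightarrow> ('a \<rightharpoonup> 'v) \<Rightarrow> 'k::comm_monoid_add) \<Rightarrow> bool" where
  "pairwise_consistent E R \<longleftrightarrow>
     (\<forall>X\<in>E. \<forall>Y\<in>E. \<exists>W. is_krel (X \<union> Y) W \<and> marginal W X = R X \<and> marginal W Y = R Y)"

definition globally_consistent ::
  "'a set set \<Rightarrow> ('a set \<Rightarrow> ('a \<rightharpoonup> 'v) \<Rightarrow> 'k::comm_monoid_add) \<Rightarrow> bool" where
  "globally_consistent E R \<longleftrightarrow> (\<exists>W. is_krel (\<Union>E) W \<and> (\<forall>X\<in>E. marginal W X = R X))"

definition local_to_global ::
  "'k::comm_monoid_add itself \<Rightarrow> 'v itself \<Rightarrow> 'a set set \<Rightarrow> bool" where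
  "local_to_global _ _ E \<longleftrightarrow>
     (\<forall>R :: 'a set \<Rightarrow> ('a \<rightharpoonup> 'v) \<Rightarrow> 'k.
        (\<forall>X\<in>E. is_krel X (R X)) \<longrightarrow> pairwise_consistent E R \<longrightarrow> globally_consistent E R)"

definition hypergraph :: "'a set set \<Rightarrow> bool" where
  "hypergraph E \<longleftrightarrow> finite E \<and> (\<forall>X\<in>E. finite X)"

definition adj :: "'b set set \<Rightarrow> ('b \<times> 'b) set" where
  "adj T = {(x, y). {x, y} \<in> T}"

text \<open>A tree on vertex set V with edge set T (undirected edges as 2-element sets):
  connected and every edge is a bridge (no cycles).\<close>

definition is_tree :: "'b set \<Rightarrow> 'b set set \<Rightarrow> bool" where
  "is_tree V T \<longleftrightarrow>
     T \<subseteq> {{x, y} | x y. x \<in> V \<and> y \<in> V \<and> x \<noteq> y} \<and>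
     (\<forall>x\<in>V. \<forall>y\<in>V. (x, y) \<in> (adj T)\<^sup>*) \<and>
     (\<forall>x y. {x, y} \<in> T \<longrightarrow> (x, y) \<notin> (adj (T - {{x, y}}))\<^sup>*)"

definition join_tree :: "'a set set \<Rightarrow> 'a set set set \<Rightarrow> bool" where
  "join_tree E T \<longleftrightarrow> is_tree E T \<and>
     (\<forall>v. let S = {X\<in>E. v \<in> X} in
        \<forall>X\<in>S. \<forall>Y\<in>S. (X, Y) \<in> (adj {e\<in>T. e \<subseteq> S})\<^sup>*)"

definition acyclic_hypergraph :: "'a set set \<Rightarrow> bool" where
  "acyclic_hypergraph E \<longleftrightarrow> (\<exists>T. join_tree E T)"

end

theory Submission
  imports Defs
begin

lemma restrict_dom_self: "dom r = A \<Longrightarrow> r |` A = r"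
  by (rule ext) (auto simp: restrict_map_def)

lemma krel_supp_finite: "is_krel A Q \<Longrightarrow> finite {t. Q t \<noteq> 0}"
  by (simp add: is_krel_def)

lemma krel_dom: "is_krel A Q \<Longrightarrow> Q t \<noteq> 0 \<Longrightarrow> dom t = A"
  by (simp add: is_krel_def)

lemma marginal_alt:
  assumes "finite S" "{r. Q r \<noteq> 0} \<subseteq> S"
  shows "marginal Q B t = (\<Sum>r\<in>{r\<in>S. r |` B = t}. Q r)"
  unfolding marginal_def
  by (rule sum.mono_neutral_left) (use assms in auto)

lemma marginal_nz:
  assumes "marginal Q B t \<noteq> 0"
  shows "\<exists>r. Q r \<noteq> 0 \<and> r |` B = t"
proof (rule ccontr)
  assume "\<not> ?thesis"
  then have e: "{r. Q r \<noteq> 0 \<and> r |` B = t} = {}" by auto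
  from assms show False unfolding marginal_def e by simp
qed

lemma marginal_krel:
  assumes "is_krel A Q" "B \<subseteq> A"
  shows "is_krel B (marginal Q B)"
proof -
  have fin: "finite {t. Q t \<noteq> 0}" using assms by (simp add: is_krel_def)
  have "{t. marginal Q B t \<noteq> 0} \<subseteq> (\<lambda>r. r |` B) ` {t. Q t \<noteq> 0}"
    using marginal_nz by fastforce
  then have "finite {t. marginal Q B t \<noteq> 0}" using fin finite_subset by auto
  moreover have "dom t = B" if nz: "marginal Q B t \<noteq> 0" for t
  proof -
    obtain r where r: "Q r \<noteq> 0" "r |` B = t" using marginal_nz[OF nz] by auto
    have "dom r = A" using assms(1) r(1) by (simp add: is_krel_def)
    then have "dom (r |` B) = A \<inter> B" by simp
    then show ?thesis using r(2) assms(2) by auto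
  qed
  ultimately show ?thesis by (simp add: is_krel_def)
qed

lemma marginal_self:
  assumes "is_krel A Q"
  shows "marginal Q A = Q"
proof
  fix t
  have "{r. Q r \<noteq> 0 \<and> r |` A = t} = (if Q t \<noteq> 0 then {t} else {})"
    using assms by (auto simp: is_krel_def restrict_dom_self)
  then show "marginal Q A t = Q t" by (simp add: marginal_def)
qed

lemma restrict_sub: "C \<subseteq> B \<Longrightarrow> x |` B |` C = x |` C"
  by (rule ext) (auto simp: restrict_map_def)

lemma marginal_trans:
  assumes "is_krel A Q" "C \<subseteq> B"
  shows "marginal (marginal Q B) C = marginal Q C"
proof
  fix t
  have fin: "finite {r. Q r \<noteq> 0}" using assms by (simp add: is_krel_def)
  let ?S = "{r. Q r \<noteq> 0 \<and> r |` C = t}"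
  let ?I = "(\<lambda>r. r |` B) ` ?S"
  have finS: "finite ?S" using fin by (rule finite_subset[rotated]) auto
  have "marginal Q C t = sum Q ?S" by (simp add: marginal_def)
  also have "\<dots> = (\<Sum>y\<in>?I. sum Q {x\<in>?S. x |` B = y})"
    by (rule sum.image_gen[OF finS])
  also have "\<dots> = (\<Sum>y\<in>?I. marginal Q B y)"
  proof (rule sum.cong[OF refl])
    fix y assume "y \<in> ?I"
    then obtain r0 where r0: "r0 \<in> ?S" "y = r0 |` B" by blast
    then have yC: "y |` C = t" using assms(2) restrict_sub by auto
    have "{x\<in>?S. x |` B = y} = {r. Q r \<noteq> 0 \<and> r |` B = y}"
    proof -
      have "x |` C = t" if "x |` B = y" for x
        using that yC restrict_sub[OF assms(2), of x] by simp
      then show ?thesis by auto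
    qed
    then show "sum Q {x\<in>?S. x |` B = y} = marginal Q B y" by (simp add: marginal_def)
  qed
  also have "\<dots> = (\<Sum>y\<in>{s. marginal Q B s \<noteq> 0 \<and> s |` C = t}. marginal Q B y)"
  proof (rule sum.mono_neutral_right)
    show "finite ?I" using finS by simp
    show "{s. marginal Q B s \<noteq> 0 \<and> s |` C = t} \<subseteq> ?I"
    proof
      fix s assume s: "s \<in> {s. marginal Q B s \<noteq> 0 \<and> s |` C = t}"
      then obtain r where r: "Q r \<noteq> 0" "r |` B = s" using marginal_nz by blast
      then have "r |` C = t" using s restrict_sub[OF assms(2), of r] by simp
      with r show "s \<in> ?I" by blast
    qed
    show "\<forall>i\<in>?I - {s. marginal Q B s \<noteq> 0 \<and> s |` C = t}. marginal Q B i = 0"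
    proof
      fix i assume i: "i \<in> ?I - {s. marginal Q B s \<noteq> 0 \<and> s |` C = t}"
      then obtain r where "r \<in> ?S" "i = r |` B" by blast
      then have "i |` C = t" using assms(2) restrict_sub by auto
      then show "marginal Q B i = 0" using i by blast
    qed
  qed
  also have "\<dots> = marginal (marginal Q B) C t" by (rule marginal_def[symmetric])
  finally show "marginal (marginal Q B) C t = marginal Q C t" ..
qed

lemma pos_sum_zero:
  assumes pos: "positive_monoid TYPE('k::comm_monoid_add)"
    and fin: "finite S" and "sum (f :: _ \<Rightarrow> 'k) S = 0" and "x \<in> S"
  shows "f x = 0"
proof -
  have "sum f S = f x + sum f (S - {x})" using fin assms(4) by (rule sum.remove)
  then have "f x + sum f (S - {x}) = 0" using assms(3) by simp
  then show ?thesis using pos unfolding positive_monoid_def by blast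
qed

lemma pos_sum_nz:
  assumes pos: "positive_monoid TYPE('k::comm_monoid_add)"
    and fin: "finite S" and "x \<in> S" and "(f :: _ \<Rightarrow> 'k) x \<noteq> 0"
  shows "sum f S \<noteq> 0"
  using pos_sum_zero[OF pos fin _ assms(3)] assms(4) by blast

lemma transport_sets:
  assumes pos: "positive_monoid TYPE('k::comm_monoid_add)"
    and tp: "transportation_property TYPE('k)"
    and fR: "finite R" and fC: "finite C"
    and eq: "sum (f :: _ \<Rightarrow> 'k) R = sum g C"
  shows "\<exists>d. (\<forall>x\<in>R. (\<Sum>y\<in>C. d x y) = f x) \<and> (\<forall>y\<in>C. (\<Sum>x\<in>R. d x y) = g y)"
proof (cases "R = {} \<or> C = {}")
  case True
  then have "\<forall>x\<in>R. f x = 0" "\<forall>y\<in>C. g y = 0"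
    using pos_sum_zero[OF pos fR, of f] pos_sum_zero[OF pos fC, of g] eq by auto
  then show ?thesis by (intro exI[of _ "\<lambda>x y. 0"]) auto
next
  case False
  obtain hR where hR: "bij_betw hR {0..<card R} R" using ex_bij_betw_nat_finite[OF fR] by blast
  obtain hC where hC: "bij_betw hC {0..<card C} C" using ex_bij_betw_nat_finite[OF fC] by blast
  have m: "0 < card R" "0 < card C" using False fR fC card_gt_0_iff by blast+
  have "(\<Sum>i<card R. f (hR i)) = sum f R"
    using sum.reindex_bij_betw[OF hR, of f] by (simp add: atLeast0LessThan)
  moreover have "(\<Sum>i<card C. g (hC i)) = sum g C"
    using sum.reindex_bij_betw[OF hC, of g] by (simp add: atLeast0LessThan)
  ultimately have "(\<Sum>i<card R. f (hR i)) = (\<Sum>j<card C. g (hC j))" using eq by simp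
  then obtain dn where dn: "\<forall>i<card R. (\<Sum>j<card C. dn i j) = f (hR i)"
    "\<forall>j<card C. (\<Sum>i<card R. dn i j) = g (hC j)"
    using tp m unfolding transportation_property_def by blast
  define iR where "iR = the_inv_into {0..<card R} hR"
  define iC where "iC = the_inv_into {0..<card C} hC"
  have injR: "inj_on hR {0..<card R}" and imR: "hR ` {0..<card R} = R"
    using hR by (auto simp: bij_betw_def)
  have injC: "inj_on hC {0..<card C}" and imC: "hC ` {0..<card C} = C"
    using hC by (auto simp: bij_betw_def)
  have iR: "x \<in> R \<Longrightarrow> iR x < card R \<and> hR (iR x) = x" for x
  proof -
    assume x: "x \<in> R"
    have "iR x \<in> {0..<card R}" unfolding iR_def
      by (rule the_inv_into_into[OF injR]) (use x imR in auto)
    moreover have "hR (iR x) = x" unfolding iR_def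
      by (rule f_the_inv_into_f[OF injR]) (use x imR in auto)
    ultimately show ?thesis by simp
  qed
  have iC: "y \<in> C \<Longrightarrow> iC y < card C \<and> hC (iC y) = y" for y
  proof -
    assume y: "y \<in> C"
    have "iC y \<in> {0..<card C}" unfolding iC_def
      by (rule the_inv_into_into[OF injC]) (use y imC in auto)
    moreover have "hC (iC y) = y" unfolding iC_def
      by (rule f_the_inv_into_f[OF injC]) (use y imC in auto)
    ultimately show ?thesis by simp
  qed
  have iC': "j < card C \<Longrightarrow> iC (hC j) = j" for j
    unfolding iC_def by (rule the_inv_into_f_f[OF injC]) simp
  have iR': "i < card R \<Longrightarrow> iR (hR i) = i" for i
    unfolding iR_def by (rule the_inv_into_f_f[OF injR]) simp
  define d where "d x y = dn (iR x) (iC y)" for x y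
  show ?thesis
  proof (intro exI[of _ d] conjI ballI)
    fix x assume x: "x \<in> R"
    have "(\<Sum>y\<in>C. d x y) = (\<Sum>j\<in>{0..<card C}. d x (hC j))"
      using sum.reindex_bij_betw[OF hC, of "d x"] by simp
    also have "\<dots> = (\<Sum>j<card C. dn (iR x) j)"
      unfolding d_def atLeast0LessThan
      by (rule sum.cong[OF refl]) (simp add: iC')
    also have "\<dots> = f x" using dn(1) iR[OF x] by simp
    finally show "(\<Sum>y\<in>C. d x y) = f x" .
  next
    fix y assume y: "y \<in> C"
    have "(\<Sum>x\<in>R. d x y) = (\<Sum>i\<in>{0..<card R}. d (hR i) y)"
      using sum.reindex_bij_betw[OF hR, of "\<lambda>x. d x y"] by simp
    also have "\<dots> = (\<Sum>i<card R. dn i (iC y))"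
      unfolding d_def atLeast0LessThan
      by (rule sum.cong[OF refl]) (simp add: iR')
    also have "\<dots> = g y" using dn(2) iC[OF y] by simp
    finally show "(\<Sum>x\<in>R. d x y) = g y" .
  qed
qed

lemma combine:
  assumes "dom s = A" "dom s' = B" "s |` (A \<inter> B) = s' |` (A \<inter> B)"
  shows "(s ++ s') |` A = s" "(s ++ s') |` B = s'" "dom (s ++ s') = A \<union> B"
proof -
  have ag: "s x = s' x" if "x \<in> A" "x \<in> B" for x
  proof -
    have "(s |` (A \<inter> B)) x = (s' |` (A \<inter> B)) x" using assms(3) by simp
    then show ?thesis using that by simp
  qed
  show "(s ++ s') |` A = s"
  proof (rule ext)
    fix x show "((s ++ s') |` A) x = s x"
      using assms(1,2) ag[of x]
      by (cases "x \<in> A"; cases "x \<in> B") (auto simp: map_add_def restrict_map_def split: option.splits)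
  qed
  show "(s ++ s') |` B = s'"
  proof (rule ext)
    fix x show "((s ++ s') |` B) x = s' x"
      using assms(1,2) ag[of x]
      by (cases "x \<in> B") (auto simp: map_add_def restrict_map_def split: option.splits)
  qed
  show "dom (s ++ s') = A \<union> B" using assms by auto
qed

lemma decompose:
  assumes "dom r = A \<union> B"
  shows "r = (r |` A) ++ (r |` B)"
proof (rule ext)
  fix x show "r x = ((r |` A) ++ (r |` B)) x"
    using assms by (cases "x \<in> B"; cases "x \<in> A") (auto simp: map_add_def restrict_map_def split: option.splits)
qed

lemma glue:
  assumes pos: "positive_monoid TYPE('k::comm_monoid_add)"
    and tp: "transportation_property TYPE('k)"
    and Q: "is_krel A (Q :: _ \<Rightarrow> 'k)" and Q': "is_krel B Q'"
    and eqm: "marginal Q (A \<inter> B) = marginal Q' (A \<inter> B)"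
  shows "\<exists>W. is_krel (A \<union> B) W \<and> marginal W A = Q \<and> marginal W B = Q'"
proof -
  define rows where "rows z = {s. Q s \<noteq> 0 \<and> s |` (A \<inter> B) = z}" for z
  define cols where "cols z = {s. Q' s \<noteq> 0 \<and> s |` (A \<inter> B) = z}" for z
  have fQ: "finite {s. Q s \<noteq> 0}" and fQ': "finite {s. Q' s \<noteq> 0}"
    using Q Q' by (auto simp: is_krel_def)
  have frows: "finite (rows z)" for z
    unfolding rows_def by (rule finite_subset[OF _ fQ]) auto
  have fcols: "finite (cols z)" for z
    unfolding cols_def by (rule finite_subset[OF _ fQ']) auto
  have ex: "\<forall>z. \<exists>d. (\<forall>x\<in>rows z. (\<Sum>y\<in>cols z. d x y) = Q x) \<and> (\<forall>y\<in>cols z. (\<Sum>x\<in>rows z. d x y) = Q' y)"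
  proof
    fix z
    have "sum Q (rows z) = sum Q' (cols z)"
      using fun_cong[OF eqm, of z] unfolding marginal_def rows_def cols_def .
    then show "\<exists>d. (\<forall>x\<in>rows z. (\<Sum>y\<in>cols z. d x y) = Q x) \<and> (\<forall>y\<in>cols z. (\<Sum>x\<in>rows z. d x y) = Q' y)"
      by (rule transport_sets[OF pos tp frows fcols])
  qed
  obtain D where D: "\<forall>z. (\<forall>x\<in>rows z. (\<Sum>y\<in>cols z. D z x y) = Q x) \<and> (\<forall>y\<in>cols z. (\<Sum>x\<in>rows z. D z x y) = Q' y)"
    using choice[OF ex] by blast
  define S where "S = {r. dom r = A \<union> B \<and> Q (r |` A) \<noteq> 0 \<and> Q' (r |` B) \<noteq> 0}"
  define W where "W r = (if r \<in> S then D (r |` (A \<inter> B)) (r |` A) (r |` B) else 0)" for r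
  have "S \<subseteq> (\<lambda>(s, s'). s ++ s') ` ({s. Q s \<noteq> 0} \<times> {s. Q' s \<noteq> 0})"
  proof
    fix r assume "r \<in> S"
    then have "r = (r |` A) ++ (r |` B)" "Q (r |` A) \<noteq> 0" "Q' (r |` B) \<noteq> 0"
      using decompose unfolding S_def by auto
    then show "r \<in> (\<lambda>(s, s'). s ++ s') ` ({s. Q s \<noteq> 0} \<times> {s. Q' s \<noteq> 0})" by force
  qed
  then have finS: "finite S" using fQ fQ' finite_subset by blast
  have suppW: "{r. W r \<noteq> 0} \<subseteq> S" unfolding W_def by auto
  have krel: "is_krel (A \<union> B) W"
    unfolding is_krel_def using finite_subset[OF suppW finS] suppW unfolding S_def by auto
  have domQ: "Q s \<noteq> 0 \<Longrightarrow> dom s = A" for s using Q by (simp add: is_krel_def)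
  have domQ': "Q' s \<noteq> 0 \<Longrightarrow> dom s = B" for s using Q' by (simp add: is_krel_def)
  have margA: "marginal W A = Q"
  proof
    fix s
    have m: "marginal W A s = sum W {r\<in>S. r |` A = s}" by (rule marginal_alt[OF finS suppW])
    show "marginal W A s = Q s"
    proof (cases "Q s = 0")
      case True
      then have e: "{r\<in>S. r |` A = s} = {}" unfolding S_def by auto
      show ?thesis unfolding m e using True by simp
    next
      case False
      define z where "z = s |` (A \<inter> B)"
      have sr: "s \<in> rows z" using False unfolding rows_def z_def by simp
      have ds: "dom s = A" using domQ False .
      have cmb: "(s ++ s') |` A = s" "(s ++ s') |` B = s'" "dom (s ++ s') = A \<union> B"
        if "s' \<in> cols z" for s'
        using combine[OF ds domQ'[of s']] that unfolding cols_def z_def by auto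
      have bij: "bij_betw (\<lambda>s'. s ++ s') (cols z) {r\<in>S. r |` A = s}"
      proof (rule bij_betw_imageI)
        show "inj_on (\<lambda>s'. s ++ s') (cols z)"
        proof
          fix x y assume xy: "x \<in> cols z" "y \<in> cols z" "s ++ x = s ++ y"
          have "x = (s ++ x) |` B" using cmb(2)[OF xy(1)] by simp
          also have "\<dots> = (s ++ y) |` B" using xy(3) by simp
          also have "\<dots> = y" using cmb(2)[OF xy(2)] by simp
          finally show "x = y" .
        qed
        show "(\<lambda>s'. s ++ s') ` cols z = {r\<in>S. r |` A = s}"
        proof
          show "(\<lambda>s'. s ++ s') ` cols z \<subseteq> {r\<in>S. r |` A = s}"
          proof
            fix r assume "r \<in> (\<lambda>s'. s ++ s') ` cols z"
            then obtain s' where s': "s' \<in> cols z" "r = s ++ s'" by blast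
            then have "Q' s' \<noteq> 0" unfolding cols_def by simp
            then show "r \<in> {r\<in>S. r |` A = s}"
              using cmb[OF s'(1)] s'(2) False unfolding S_def by simp
          qed
          show "{r\<in>S. r |` A = s} \<subseteq> (\<lambda>s'. s ++ s') ` cols z"
          proof
            fix r assume r: "r \<in> {r\<in>S. r |` A = s}"
            then have dr: "dom r = A \<union> B" and rA: "r |` A = s" and q: "Q' (r |` B) \<noteq> 0"
              unfolding S_def by auto
            have "r = s ++ (r |` B)" using decompose[OF dr] rA by simp
            moreover have "r |` B \<in> cols z"
            proof -
              have "r |` B |` (A \<inter> B) = r |` (A \<inter> B)" by (simp add: Int_absorb1 Int_commute)
              moreover have "r |` A |` (A \<inter> B) = r |` (A \<inter> B)" by (simp add: Int_absorb1)
              ultimately show ?thesis using q rA unfolding cols_def z_def by simp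
            qed
            ultimately show "r \<in> (\<lambda>s'. s ++ s') ` cols z" by blast
          qed
        qed
      qed
      have "sum W {r\<in>S. r |` A = s} = (\<Sum>s'\<in>cols z. W (s ++ s'))"
        using sum.reindex_bij_betw[OF bij, of W] by simp
      also have "\<dots> = (\<Sum>s'\<in>cols z. D z s s')"
      proof (rule sum.cong[OF refl])
        fix s' assume s': "s' \<in> cols z"
        then have "Q' s' \<noteq> 0" unfolding cols_def by simp
        then have inS: "s ++ s' \<in> S" using cmb[OF s'] False unfolding S_def by simp
        have "(s ++ s') |` (A \<inter> B) = (s ++ s') |` A |` (A \<inter> B)" by simp
        also have "\<dots> = z" by (simp only: cmb(1)[OF s'] z_def)
        finally have "(s ++ s') |` (A \<inter> B) = z" .
        then show "W (s ++ s') = D z s s'" using inS cmb[OF s'] unfolding W_def by simp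
      qed
      also have "\<dots> = Q s" using D sr by blast
      finally show ?thesis using m by simp
    qed
  qed
  have margB: "marginal W B = Q'"
  proof
    fix s'
    have m: "marginal W B s' = sum W {r\<in>S. r |` B = s'}" by (rule marginal_alt[OF finS suppW])
    show "marginal W B s' = Q' s'"
    proof (cases "Q' s' = 0")
      case True
      then have e: "{r\<in>S. r |` B = s'} = {}" unfolding S_def by auto
      show ?thesis unfolding m e using True by simp
    next
      case False
      define z where "z = s' |` (A \<inter> B)"
      have sr: "s' \<in> cols z" using False unfolding cols_def z_def by simp
      have ds: "dom s' = B" using domQ' False .
      have cmb: "(s ++ s') |` A = s" "(s ++ s') |` B = s'" "dom (s ++ s') = A \<union> B"
        if "s \<in> rows z" for s
        using combine[OF domQ[of s] ds] that unfolding rows_def z_def by auto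
      have bij: "bij_betw (\<lambda>s. s ++ s') (rows z) {r\<in>S. r |` B = s'}"
      proof (rule bij_betw_imageI)
        show "inj_on (\<lambda>s. s ++ s') (rows z)"
        proof
          fix x y assume xy: "x \<in> rows z" "y \<in> rows z" "x ++ s' = y ++ s'"
          have "x = (x ++ s') |` A" using cmb(1)[OF xy(1)] by simp
          also have "\<dots> = (y ++ s') |` A" using xy(3) by simp
          also have "\<dots> = y" using cmb(1)[OF xy(2)] by simp
          finally show "x = y" .
        qed
        show "(\<lambda>s. s ++ s') ` rows z = {r\<in>S. r |` B = s'}"
        proof
          show "(\<lambda>s. s ++ s') ` rows z \<subseteq> {r\<in>S. r |` B = s'}"
          proof
            fix r assume "r \<in> (\<lambda>s. s ++ s') ` rows z"
            then obtain s where s: "s \<in> rows z" "r = s ++ s'" by blast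
            then have "Q s \<noteq> 0" unfolding rows_def by simp
            then show "r \<in> {r\<in>S. r |` B = s'}"
              using cmb[OF s(1)] s(2) False unfolding S_def by simp
          qed
          show "{r\<in>S. r |` B = s'} \<subseteq> (\<lambda>s. s ++ s') ` rows z"
          proof
            fix r assume r: "r \<in> {r\<in>S. r |` B = s'}"
            then have dr: "dom r = A \<union> B" and rB: "r |` B = s'" and q: "Q (r |` A) \<noteq> 0"
              unfolding S_def by auto
            have "r = (r |` A) ++ s'" using decompose[OF dr] rB by simp
            moreover have "r |` A \<in> rows z"
            proof -
              have "r |` B |` (A \<inter> B) = r |` (A \<inter> B)" by (simp add: Int_absorb1 Int_commute)
              moreover have "r |` A |` (A \<inter> B) = r |` (A \<inter> B)" by (simp add: Int_absorb1)
              ultimately show ?thesis using q rB unfolding rows_def z_def by simp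
            qed
            ultimately show "r \<in> (\<lambda>s. s ++ s') ` rows z" by blast
          qed
        qed
      qed
      have "sum W {r\<in>S. r |` B = s'} = (\<Sum>s\<in>rows z. W (s ++ s'))"
        using sum.reindex_bij_betw[OF bij, of W] by simp
      also have "\<dots> = (\<Sum>s\<in>rows z. D z s s')"
      proof (rule sum.cong[OF refl])
        fix s assume s: "s \<in> rows z"
        then have "Q s \<noteq> 0" unfolding rows_def by simp
        then have inS: "s ++ s' \<in> S" using cmb[OF s] False unfolding S_def by simp
        have "(s ++ s') |` (A \<inter> B) = (s ++ s') |` B |` (A \<inter> B)"
          by (simp add: Int_absorb1)
        also have "\<dots> = z" by (simp only: cmb(2)[OF s] z_def)
        finally have "(s ++ s') |` (A \<inter> B) = z" .
        then show "W (s ++ s') = D z s s'" using inS cmb[OF s] unfolding W_def by simp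
      qed
      also have "\<dots> = Q' s'" using D sr by blast
      finally show ?thesis using m by simp
    qed
  qed
  show ?thesis using krel margA margB by blast
qed

lemma adj_sym: "(x, y) \<in> adj T \<Longrightarrow> (y, x) \<in> adj T"
  by (simp add: adj_def insert_commute)

lemma adj_iff: "(x, y) \<in> adj T \<longleftrightarrow> {x, y} \<in> T"
  by (simp add: adj_def)

lemma rtr_sym: "(x, y) \<in> (adj T)\<^sup>* \<Longrightarrow> (y, x) \<in> (adj T)\<^sup>*"
proof (induction rule: rtrancl_induct)
  case base
  then show ?case by simp
next
  case (step y z)
  then have "(z, y) \<in> adj T" by (simp add: adj_sym)
  then show ?case using step.IH by (rule converse_rtrancl_into_rtrancl)
qed

lemma rtr_mono: "T \<subseteq> T' \<Longrightarrow> (x, y) \<in> (adj T)\<^sup>* \<Longrightarrow> (x, y) \<in> (adj T')\<^sup>*"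
proof -
  assume "T \<subseteq> T'" "(x, y) \<in> (adj T)\<^sup>*"
  moreover have "adj T \<subseteq> adj T'" using \<open>T \<subseteq> T'\<close> by (auto simp: adj_def)
  ultimately show ?thesis using rtrancl_mono by blast
qed

lemma avoid:
  assumes "(a, b) \<in> (adj G)\<^sup>*" "a \<noteq> X" "b \<noteq> X"
    and leaf: "\<And>w. {X, w} \<in> G \<Longrightarrow> w = Y"
  shows "(a, b) \<in> (adj {e\<in>G. X \<notin> e})\<^sup>*"
proof -
  let ?G = "{e\<in>G. X \<notin> e}"
  have "(c \<noteq> X \<longrightarrow> (a, c) \<in> (adj ?G)\<^sup>*) \<and> (c = X \<longrightarrow> (a, Y) \<in> (adj ?G)\<^sup>*)"
    if "(a, c) \<in> (adj G)\<^sup>*" for c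
    using that
  proof (induction rule: rtrancl_induct)
    case base
    then show ?case using assms(2) by simp
  next
    case (step c d)
    have cd: "{c, d} \<in> G" using step(2) by (simp add: adj_def)
    show ?case
    proof (cases "c = X")
      case True
      then have "d = Y" using leaf cd by simp
      then show ?thesis using step.IH True by auto
    next
      case False
      show ?thesis
      proof (cases "d = X")
        case True
        then have "{X, c} \<in> G" using cd by (simp add: insert_commute)
        then have "c = Y" using leaf by simp
        then show ?thesis using step.IH False True by auto
      next
        case dX: False
        then have "(c, d) \<in> adj ?G" using cd False by (simp add: adj_def)
        then have "(a, d) \<in> (adj ?G)\<^sup>*" using step.IH False by (meson rtrancl_into_rtrancl)
        then show ?thesis using dX by simp
      qed
    qed
  qed
  then show ?thesis using assms(1,3) by blast
qed

lemma edge2: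
  assumes "is_tree V T" "{p, q} \<in> T"
  shows "p \<in> V \<and> q \<in> V \<and> p \<noteq> q"
proof -
  obtain x y where "{p, q} = {x, y}" "x \<in> V" "y \<in> V" "x \<noteq> y"
    using assms unfolding is_tree_def by blast
  then show ?thesis by (auto simp: doubleton_eq_iff)
qed

lemma edge2': "is_tree V T \<Longrightarrow> e \<in> T \<Longrightarrow> \<exists>p q. e = {p, q} \<and> p \<in> V \<and> q \<in> V \<and> p \<noteq> q"
  unfolding is_tree_def by blast

lemma tree_conn: "is_tree V T \<Longrightarrow> x \<in> V \<Longrightarrow> y \<in> V \<Longrightarrow> (x, y) \<in> (adj T)\<^sup>*"
  unfolding is_tree_def by blast

lemma tree_bridge: "is_tree V T \<Longrightarrow> {x, y} \<in> T \<Longrightarrow> (x, y) \<notin> (adj (T - {{x, y}}))\<^sup>*"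
  unfolding is_tree_def by blast

lemma reach_in:
  assumes "is_tree V T" "T' \<subseteq> T" "(p, q) \<in> (adj T')\<^sup>*" "p \<in> V"
  shows "q \<in> V"
  using assms(3,4)
proof (induction rule: rtrancl_induct)
  case base then show ?case by simp
next
  case (step y z)
  then have "{y, z} \<in> T" using assms(2) by (auto simp: adj_def)
  then show ?case using edge2[OF assms(1)] by blast
qed

lemma first_step: "(a, b) \<in> r\<^sup>* \<Longrightarrow> a \<noteq> b \<Longrightarrow> \<exists>c. (a, c) \<in> r"
  by (erule converse_rtranclE) auto

lemma tree_leaf:
  assumes "finite V" "is_tree V T" "y \<in> V" "x0 \<in> V" "x0 \<noteq> y"
  shows "\<exists>x\<in>V. x \<noteq> y \<and> (\<exists>z. {x, z} \<in> T \<and> (\<forall>w. {x, w} \<in> T \<longrightarrow> w = z))"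
  using assms
proof (induction "card V" arbitrary: V T y x0 rule: less_induct)
  case less
  have tr: "is_tree V T" by fact
  have yx: "(y, x0) \<in> (adj T)\<^sup>*" using tree_conn[OF tr less.prems(3,4)] .
  have "y \<noteq> x0" using less.prems(5) by simp
  from first_step[OF yx this] obtain z where "(y, z) \<in> adj T" by blast
  then have e: "{y, z} \<in> T" by (simp add: adj_def)
  have zV: "z \<in> V" and zy: "z \<noteq> y" using edge2[OF tr e] by auto
  define C where "C = {w. (z, w) \<in> (adj (T - {{y, z}}))\<^sup>*}"
  have "{z, y} \<in> T" using e by (simp add: insert_commute)
  then have "(z, y) \<notin> (adj (T - {{z, y}}))\<^sup>*" by (rule tree_bridge[OF tr])
  then have yC: "y \<notin> C" unfolding C_def by (simp add: insert_commute)
  have CV: "C \<subseteq> V"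
  proof
    fix w assume "w \<in> C"
    then have "(z, w) \<in> (adj (T - {{y, z}}))\<^sup>*" unfolding C_def by simp
    then show "w \<in> V" by (rule reach_in[OF tr Diff_subset _ zV])
  qed
  have zC: "z \<in> C" unfolding C_def by simp
  show ?case
  proof (cases "\<forall>w. {z, w} \<in> T \<longrightarrow> w = y")
    case True
    have "z \<noteq> y \<and> (\<exists>z'. {z, z'} \<in> T \<and> (\<forall>w. {z, w} \<in> T \<longrightarrow> w = z'))"
      using True zy \<open>{z, y} \<in> T\<close> by blast
    then show ?thesis using zV by blast
  next
    case False
    then obtain w where zw: "{z, w} \<in> T" "w \<noteq> y" by blast
    have wz: "w \<noteq> z" using edge2[OF tr zw(1)] by auto
    have "{z, w} \<noteq> {y, z}" using zw(2) zy by (auto simp: doubleton_eq_iff)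
    then have "(z, w) \<in> adj (T - {{y, z}})" using zw(1) by (simp add: adj_def)
    then have wC: "w \<in> C" unfolding C_def by simp
    define T' where "T' = {f\<in>T. f \<subseteq> C}"
    have reachC: "(z, p) \<in> (adj T')\<^sup>*" if "p \<in> C" for p
    proof -
      have "(z, p) \<in> (adj (T - {{y, z}}))\<^sup>*" using that unfolding C_def by simp
      then show ?thesis
      proof (induction rule: rtrancl_induct)
        case base then show ?case by simp
      next
        case (step q q')
        have "q \<in> C" "q' \<in> C" using step(1,2) unfolding C_def by auto
        moreover have "{q, q'} \<in> T" using step(2) by (simp add: adj_def)
        ultimately have "(q, q') \<in> adj T'" unfolding T'_def adj_def by simp
        with step.IH show ?case by (rule rtrancl_into_rtrancl)
      qed
    qed
    have trC: "is_tree C T'"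
      unfolding is_tree_def
    proof (intro conjI ballI allI impI)
      show "T' \<subseteq> {{x, y} |x y. x \<in> C \<and> y \<in> C \<and> x \<noteq> y}"
      proof
        fix f assume f: "f \<in> T'"
        then have fT: "f \<in> T" and fC: "f \<subseteq> C" unfolding T'_def by auto
        obtain p q where pq: "f = {p, q}" "p \<noteq> q" using edge2'[OF tr fT] by blast
        then have "p \<in> C" "q \<in> C" using fC by auto
        then show "f \<in> {{x, y} |x y. x \<in> C \<and> y \<in> C \<and> x \<noteq> y}"
          by (intro CollectI exI[of _ p] exI[of _ q]) (use pq in simp)
      qed
    next
      fix p q assume "p \<in> C" "q \<in> C"
      then have "(z, p) \<in> (adj T')\<^sup>*" "(z, q) \<in> (adj T')\<^sup>*" using reachC by auto
      then have "(p, z) \<in> (adj T')\<^sup>*" "(z, q) \<in> (adj T')\<^sup>*" using rtr_sym by auto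
      then show "(p, q) \<in> (adj T')\<^sup>*" by (rule rtrancl_trans)
    next
      fix p q assume "{p, q} \<in> T'"
      then have "{p, q} \<in> T" unfolding T'_def by simp
      then have "(p, q) \<notin> (adj (T - {{p, q}}))\<^sup>*" by (rule tree_bridge[OF tr])
      moreover have "T' - {{p, q}} \<subseteq> T - {{p, q}}" unfolding T'_def by auto
      ultimately show "(p, q) \<notin> (adj (T' - {{p, q}}))\<^sup>*" using rtr_mono[of "T' - {{p, q}}" "T - {{p, q}}" p q] by blast
    qed
    have "C \<subset> V" using CV yC less.prems(3) by blast
    then have "card C < card V" using less.prems(1) by (intro psubset_card_mono)
    have "\<exists>x\<in>C. x \<noteq> z \<and> (\<exists>z'. {x, z'} \<in> T' \<and> (\<forall>w. {x, w} \<in> T' \<longrightarrow> w = z'))"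
      by (rule less.hyps[OF \<open>card C < card V\<close> finite_subset[OF CV less.prems(1)] trC zC wC wz])
    then obtain x z' where x: "x \<in> C" "x \<noteq> z" "{x, z'} \<in> T'" "\<forall>w. {x, w} \<in> T' \<longrightarrow> w = z'"
      by blast
    have "\<forall>w'. {x, w'} \<in> T \<longrightarrow> w' = z'"
    proof (intro allI impI)
      fix w' assume xw: "{x, w'} \<in> T"
      have "{x, w'} \<noteq> {y, z}"
      proof
        assume "{x, w'} = {y, z}"
        then have "x \<in> {y, z}" by blast
        then show False using x(1,2) yC by blast
      qed
      then have "(x, w') \<in> adj (T - {{y, z}})" using xw by (simp add: adj_def)
      moreover have "(z, x) \<in> (adj (T - {{y, z}}))\<^sup>*" using x(1) unfolding C_def by simp
      ultimately have "(z, w') \<in> (adj (T - {{y, z}}))\<^sup>*" by (meson rtrancl_into_rtrancl)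
      then have "w' \<in> C" unfolding C_def by simp
      then have "{x, w'} \<in> T'" using x(1) xw unfolding T'_def by simp
      then show "w' = z'" using x(4) by simp
    qed
    moreover have "{x, z'} \<in> T" using x(3) unfolding T'_def by simp
    moreover have "x \<in> V" "x \<noteq> y" using x(1) CV yC by auto
    ultimately show ?thesis by blast
  qed
qed

lemma jt_remove:
  assumes jt: "join_tree E T" and X: "X \<in> E" and lf: "{X, Y} \<in> T" "\<forall>w. {X, w} \<in> T \<longrightarrow> w = Y"
  shows "join_tree (E - {X}) {e\<in>T. X \<notin> e} \<and> Y \<in> E \<and> Y \<noteq> X \<and> (\<forall>Z\<in>E - {X}. X \<inter> Z \<subseteq> Y)"
proof -
  have jt': "is_tree E T \<and> (\<forall>v. \<forall>Z1\<in>{X\<in>E. v \<in> X}. \<forall>Z2\<in>{X\<in>E. v \<in> X}.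
      (Z1, Z2) \<in> (adj {e\<in>T. e \<subseteq> {X\<in>E. v \<in> X}})\<^sup>*)"
    using jt unfolding join_tree_def Let_def .
  have tr: "is_tree E T" using jt' by (rule conjunct1)
  have jp: "(Z1, Z2) \<in> (adj {e\<in>T. e \<subseteq> {X\<in>E. v \<in> X}})\<^sup>*"
    if "Z1 \<in> {X\<in>E. v \<in> X}" "Z2 \<in> {X\<in>E. v \<in> X}" for v Z1 Z2
    using conjunct2[OF jt'] that by blast
  have Y: "Y \<in> E" "Y \<noteq> X" using edge2[OF tr lf(1)] by auto
  let ?T = "{e\<in>T. X \<notin> e}"
  have tr': "is_tree (E - {X}) ?T"
    unfolding is_tree_def
  proof (intro conjI ballI allI impI)
    show "?T \<subseteq> {{x, y} |x y. x \<in> E - {X} \<and> y \<in> E - {X} \<and> x \<noteq> y}"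
    proof
      fix f assume f: "f \<in> ?T"
      then have "f \<in> T" by simp
      then obtain p q where "f = {p, q}" "p \<noteq> q" "p \<in> E" "q \<in> E" using edge2'[OF tr \<open>f \<in> T\<close>] by blast
      moreover have "p \<noteq> X" "q \<noteq> X" using f \<open>f = {p, q}\<close> by auto
      ultimately show "f \<in> {{x, y} |x y. x \<in> E - {X} \<and> y \<in> E - {X} \<and> x \<noteq> y}"
        by (intro CollectI exI[of _ p] exI[of _ q]) simp
    qed
  next
    fix p q assume pq: "p \<in> E - {X}" "q \<in> E - {X}"
    then have "(p, q) \<in> (adj T)\<^sup>*" using tree_conn[OF tr] by blast
    then show "(p, q) \<in> (adj ?T)\<^sup>*" using avoid[of p q T X Y] pq lf(2) by blast
  next
    fix p q assume "{p, q} \<in> ?T"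
    then have "{p, q} \<in> T" by simp
    then have "(p, q) \<notin> (adj (T - {{p, q}}))\<^sup>*" by (rule tree_bridge[OF tr])
    moreover have "?T - {{p, q}} \<subseteq> T - {{p, q}}" by auto
    ultimately show "(p, q) \<notin> (adj (?T - {{p, q}}))\<^sup>*" using rtr_mono[of "?T - {{p, q}}" "T - {{p, q}}" p q] by blast
  qed
  have jp': "(Z1, Z2) \<in> (adj {e\<in>?T. e \<subseteq> {X'\<in>E - {X}. v \<in> X'}})\<^sup>*"
    if "Z1 \<in> {X'\<in>E - {X}. v \<in> X'}" "Z2 \<in> {X'\<in>E - {X}. v \<in> X'}" for v Z1 Z2
  proof -
    let ?S = "{X\<in>E. v \<in> X}"
    have "(Z1, Z2) \<in> (adj {e\<in>T. e \<subseteq> ?S})\<^sup>*" using jp[of Z1 v Z2] that by blast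
    then have p: "(Z1, Z2) \<in> (adj {e\<in>{e\<in>T. e \<subseteq> ?S}. X \<notin> e})\<^sup>*"
      using avoid[of Z1 Z2 "{e\<in>T. e \<subseteq> ?S}" X Y] that lf(2) by blast
    have sub: "{e\<in>{e\<in>T. e \<subseteq> ?S}. X \<notin> e} \<subseteq> {e\<in>?T. e \<subseteq> {X'\<in>E - {X}. v \<in> X'}}"
    proof
      fix e assume "e \<in> {e\<in>{e\<in>T. e \<subseteq> ?S}. X \<notin> e}"
      then have "e \<in> T" "e \<subseteq> ?S" "X \<notin> e" by auto
      then show "e \<in> {e\<in>?T. e \<subseteq> {X'\<in>E - {X}. v \<in> X'}}" by blast
    qed
    show ?thesis by (rule rtr_mono[OF sub p])
  qed
  have inter: "X \<inter> Z \<subseteq> Y" if "Z \<in> E - {X}" for Z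
  proof
    fix v assume v: "v \<in> X \<inter> Z"
    let ?S = "{X\<in>E. v \<in> X}"
    have XZ: "(X, Z) \<in> (adj {e\<in>T. e \<subseteq> ?S})\<^sup>*" using jp[of X v Z] that v X by blast
    have "X \<noteq> Z" using that by blast
    from first_step[OF XZ this] obtain w where "(X, w) \<in> adj {e\<in>T. e \<subseteq> ?S}" by blast
    then have "{X, w} \<in> T" "{X, w} \<subseteq> ?S" by (auto simp: adj_def)
    then show "v \<in> Y" using lf(2) by auto
  qed
  have "join_tree (E - {X}) ?T" unfolding join_tree_def Let_def using tr' jp' by blast
  then show ?thesis using Y inter by blast
qed

lemma pc_subset: "pairwise_consistent E R \<Longrightarrow> E' \<subseteq> E \<Longrightarrow> pairwise_consistent E' R"
  unfolding pairwise_consistent_def by blast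

lemma acyclic_glob:
  assumes pos: "positive_monoid TYPE('k::comm_monoid_add)"
    and tp: "transportation_property TYPE('k)"
  shows "finite E \<Longrightarrow> join_tree E T \<Longrightarrow> \<forall>X\<in>E. is_krel X (R X :: _ \<Rightarrow> 'k) \<Longrightarrow>
    pairwise_consistent E R \<Longrightarrow> globally_consistent E R"
proof (induction "card E" arbitrary: E T rule: less_induct)
  case less
  have tr: "is_tree E T" using less.prems(2) unfolding join_tree_def by blast
  show ?case
  proof (cases "\<exists>y\<in>E. \<exists>x0\<in>E. x0 \<noteq> y")
    case False
    then consider "E = {}" | X where "E = {X}" by blast
    then show ?thesis
    proof cases
      case 1
      have "is_krel {} (\<lambda>_. 0 :: 'k)" by (simp add: is_krel_def)
      then show ?thesis unfolding globally_consistent_def 1 by auto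
    next
      case 2
      have k: "is_krel X (R X)" using less.prems(3) 2 by simp
      then show ?thesis unfolding globally_consistent_def 2 using marginal_self[OF k] by auto
    qed
  next
    case True
    then obtain y x0 where yx: "y \<in> E" "x0 \<in> E" "x0 \<noteq> y" by blast
    obtain X Y where X: "X \<in> E" "{X, Y} \<in> T" "\<forall>w. {X, w} \<in> T \<longrightarrow> w = Y"
      using tree_leaf[OF less.prems(1) tr yx] by blast
    let ?E = "E - {X}"
    note rm0 = jt_remove[OF less.prems(2) X]
    have rm: "join_tree ?E {e\<in>T. X \<notin> e}" "Y \<in> E" "Y \<noteq> X" "\<forall>Z\<in>?E. X \<inter> Z \<subseteq> Y"
      using rm0 by simp_all
    have c: "card ?E < card E" using card_Diff1_less[OF less.prems(1) X(1)] .
    have f: "finite ?E" using less.prems(1) by simp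
    have k: "\<forall>X'\<in>?E. is_krel X' (R X')" using less.prems(3) by simp
    have p: "pairwise_consistent ?E R" using less.prems(4) by (rule pc_subset) blast
    have "globally_consistent ?E R" by (rule less.hyps[OF c f rm(1) k p])
    then obtain W' where W': "is_krel (\<Union>?E) W'" "\<forall>X'\<in>?E. marginal W' X' = R X'"
      unfolding globally_consistent_def by blast
    have YE: "Y \<in> ?E" using rm by simp
    obtain WXY where WXY: "is_krel (X \<union> Y) WXY" "marginal WXY X = R X" "marginal WXY Y = R Y"
      using less.prems(4) X(1) rm(2) unfolding pairwise_consistent_def by blast
    have Zeq: "\<Union>?E \<inter> X = X \<inter> Y" using rm(4) YE by blast
    have "marginal W' (\<Union>?E \<inter> X) = marginal (marginal W' Y) (X \<inter> Y)"
      unfolding Zeq by (rule marginal_trans[OF W'(1), symmetric]) simp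
    also have "\<dots> = marginal (R Y) (X \<inter> Y)" using W'(2) YE by simp
    also have "\<dots> = marginal WXY (X \<inter> Y)"
      unfolding WXY(3)[symmetric] by (rule marginal_trans[OF WXY(1)]) simp
    also have "\<dots> = marginal (marginal WXY X) (X \<inter> Y)"
      by (rule marginal_trans[OF WXY(1), symmetric]) simp
    also have "\<dots> = marginal (R X) (\<Union>?E \<inter> X)" unfolding Zeq WXY(2) ..
    finally have eqm: "marginal W' (\<Union>?E \<inter> X) = marginal (R X) (\<Union>?E \<inter> X)" .
    have kX: "is_krel X (R X)" using less.prems(3) X(1) by simp
    obtain W where W: "is_krel (\<Union>?E \<union> X) W" "marginal W (\<Union>?E) = W'" "marginal W X = R X"
      using glue[OF pos tp W'(1) kX eqm] by blast
    have UE: "\<Union>?E \<union> X = \<Union>E" using X(1) by blast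
    have "marginal W X' = R X'" if "X' \<in> E" for X'
    proof (cases "X' = X")
      case True then show ?thesis using W(3) by simp
    next
      case False
      then have X'E: "X' \<in> ?E" using that by simp
      have "marginal W X' = marginal (marginal W (\<Union>?E)) X'"
        by (rule marginal_trans[OF W(1), symmetric]) (use X'E in blast)
      also have "\<dots> = R X'" using W(2) W'(2) X'E by simp
      finally show ?thesis .
    qed
    then show ?thesis unfolding globally_consistent_def using W(1) UE by auto
  qed
qed

definition jp :: "'a set set \<Rightarrow> 'a set set set \<Rightarrow> 'a \<Rightarrow> bool" where
  "jp E T v \<longleftrightarrow> (\<forall>Z1\<in>{X\<in>E. v \<in> X}. \<forall>Z2\<in>{X\<in>E. v \<in> X}.
     (Z1, Z2) \<in> (adj {e\<in>T. e \<subseteq> {X\<in>E. v \<in> X}})\<^sup>*)"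

definition badVM :: "'a set set \<Rightarrow> 'a set \<Rightarrow> 'a set set \<Rightarrow> bool" where
  "badVM E V' M \<longleftrightarrow> finite V' \<and> finite M \<and> M \<noteq> {} \<and>
     (\<forall>Y\<in>M. Y \<noteq> {} \<and> Y \<subseteq> V') \<and> (\<forall>Y\<in>M. \<forall>Y'\<in>M. Y \<subseteq> Y' \<longrightarrow> Y = Y') \<and>
     (\<forall>v\<in>V'. \<exists>Y1\<in>M. \<exists>Y2\<in>M. Y1 \<noteq> Y2 \<and> v \<in> Y1 \<and> v \<in> Y2) \<and>
     (\<forall>X\<in>E. \<exists>Y\<in>M. X \<inter> V' \<subseteq> Y) \<and> (\<forall>Y\<in>M. \<exists>X\<in>E. X \<inter> V' = Y)"

definition bad :: "'a set set \<Rightarrow> 'a set \<Rightarrow> bool" where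
  "bad E U \<longleftrightarrow> (\<exists>V' M. V' \<subseteq> U \<and> badVM E V' M)"

lemma badVM_ext:
  assumes b: "badVM E V' M" and X: "X \<inter> V' \<subseteq> Y \<inter> V'" and Y: "Y \<in> E"
  shows "badVM (insert X E) V' M"
proof -
  have a: "\<forall>X'\<in>E. \<exists>Y'\<in>M. X' \<inter> V' \<subseteq> Y'" using b unfolding badVM_def by (elim conjE) assumption
  have c: "\<forall>Y\<in>M. \<exists>X\<in>E. X \<inter> V' = Y" using b unfolding badVM_def by (elim conjE) assumption
  obtain Y' where "Y' \<in> M" "Y \<inter> V' \<subseteq> Y'" using a Y by blast
  then have "\<exists>Y'\<in>M. X \<inter> V' \<subseteq> Y'" using X by blast
  then have a': "\<forall>X'\<in>insert X E. \<exists>Y'\<in>M. X' \<inter> V' \<subseteq> Y'" using a by blast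
  have c': "\<forall>Y\<in>M. \<exists>X'\<in>insert X E. X' \<inter> V' = Y" using c by blast
  show ?thesis using b a' c' unfolding badVM_def
    apply (elim conjE)
    apply (intro conjI)
           apply assumption+
    done
qed

lemma noX:
  assumes tr: "is_tree E' T'" and X: "X \<notin> E'" and pq: "(p, q) \<in> (adj T')\<^sup>*"
  shows "p = q \<or> (p \<noteq> X \<and> q \<noteq> X)"
  using pq
proof (induction rule: rtrancl_induct)
  case base then show ?case by simp
next
  case (step y z)
  then have "{y, z} \<in> T'" by (simp add: adj_def)
  then have "y \<in> E'" "z \<in> E'" using edge2[OF tr] by auto
  then show ?case using step.IH X by auto
qed

lemma tree_ext:
  assumes tr: "is_tree E' T'" and X: "X \<notin> E'" and Y: "Y \<in> E'"
  shows "is_tree (insert X E') (insert {X, Y} T')"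
  unfolding is_tree_def
proof (intro conjI ballI allI impI)
  let ?G = "insert {X, Y} T'"
  have XY: "X \<noteq> Y" using X Y by auto
  show "?G \<subseteq> {{x, y} |x y. x \<in> insert X E' \<and> y \<in> insert X E' \<and> x \<noteq> y}"
  proof
    fix f assume f: "f \<in> ?G"
    show "f \<in> {{x, y} |x y. x \<in> insert X E' \<and> y \<in> insert X E' \<and> x \<noteq> y}"
    proof (cases "f = {X, Y}")
      case True
      then show ?thesis using XY Y by (intro CollectI exI[of _ X] exI[of _ Y]) simp
    next
      case False
      then have "f \<in> T'" using f by simp
      then obtain p q where "f = {p, q}" "p \<in> E'" "q \<in> E'" "p \<noteq> q" using edge2'[OF tr] by blast
      then show ?thesis by (intro CollectI exI[of _ p] exI[of _ q]) simp
    qed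
  qed
next
  let ?G = "insert {X, Y} T'"
  have toY: "(p, Y) \<in> (adj ?G)\<^sup>*" if "p \<in> insert X E'" for p
  proof (cases "p = X")
    case True
    then have "(p, Y) \<in> adj ?G" by (simp add: adj_def)
    then show ?thesis by (rule r_into_rtrancl)
  next
    case False
    then have pa: "(p, Y) \<in> (adj T')\<^sup>*" using tree_conn[OF tr _ Y] that by simp
    have "T' \<subseteq> ?G" by auto
    then show ?thesis using pa by (rule rtr_mono)
  qed
  fix p q assume pq: "p \<in> insert X E'" "q \<in> insert X E'"
  have a: "(p, Y) \<in> (adj ?G)\<^sup>*" by (rule toY[OF pq(1)])
  have "(q, Y) \<in> (adj ?G)\<^sup>*" by (rule toY[OF pq(2)])
  then have b: "(Y, q) \<in> (adj ?G)\<^sup>*" by (rule rtr_sym)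
  show "(p, q) \<in> (adj ?G)\<^sup>*" using a b by (rule rtrancl_trans)
next
  let ?G = "insert {X, Y} T'"
  have XY: "X \<noteq> Y" using X Y by auto
  have XnT: "{X, w} \<notin> T'" for w
  proof
    assume "{X, w} \<in> T'"
    then show False using edge2[OF tr] X by blast
  qed
  fix p q assume pq: "{p, q} \<in> ?G"
  show "(p, q) \<notin> (adj (?G - {{p, q}}))\<^sup>*"
  proof (cases "{p, q} = {X, Y}")
    case True
    have "?G - {{p, q}} = T'" using True XnT[of Y] by auto
    moreover have "p \<noteq> q" using True XY by (auto simp: doubleton_eq_iff)
    moreover have "p = X \<or> q = X" using True by (auto simp: doubleton_eq_iff)
    ultimately show ?thesis using noX[OF tr X, of p q] by auto
  next
    case False
    then have pqT: "{p, q} \<in> T'" using pq by simp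
    then have pE: "p \<in> E'" "q \<in> E'" using edge2[OF tr] by auto
    then have pX: "p \<noteq> X" "q \<noteq> X" using X by auto
    show ?thesis
    proof
      assume path: "(p, q) \<in> (adj (?G - {{p, q}}))\<^sup>*"
      have lf: "w = Y" if "{X, w} \<in> ?G - {{p, q}}" for w
      proof -
        have "{X, w} = {X, Y}" using that XnT[of w] by auto
        then show ?thesis using XY by (auto simp: doubleton_eq_iff)
      qed
      have p2: "(p, q) \<in> (adj {e\<in>?G - {{p, q}}. X \<notin> e})\<^sup>*"
        by (rule avoid[OF path pX lf])
      have "{e\<in>?G - {{p, q}}. X \<notin> e} \<subseteq> T' - {{p, q}}" by auto
      then have "(p, q) \<in> (adj (T' - {{p, q}}))\<^sup>*" by (rule rtr_mono[OF _ p2])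
      then show False using tree_bridge[OF tr pqT] by simp
    qed
  qed
qed

lemma jp_ext:
  assumes jp: "jp E' T' v" and X: "X \<notin> E'" and Y: "Y \<in> E'" and sub: "v \<in> X \<Longrightarrow> v \<in> Y"
  shows "jp (insert X E') (insert {X, Y} T') v"
  unfolding jp_def
proof (intro ballI)
  let ?S = "{Z\<in>insert X E'. v \<in> Z}"
  let ?S' = "{Z\<in>E'. v \<in> Z}"
  let ?G = "insert {X, Y} T'"
  have sub': "{e\<in>T'. e \<subseteq> ?S'} \<subseteq> {e\<in>?G. e \<subseteq> ?S}" by auto
  have old: "(Z1, Z2) \<in> (adj {e\<in>?G. e \<subseteq> ?S})\<^sup>*" if "Z1 \<in> ?S'" "Z2 \<in> ?S'" for Z1 Z2
  proof -
    have "(Z1, Z2) \<in> (adj {e\<in>T'. e \<subseteq> ?S'})\<^sup>*" using jp that unfolding jp_def by blast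
    then show ?thesis by (rule rtr_mono[OF sub'])
  qed
  fix Z1 Z2 assume Z: "Z1 \<in> ?S" "Z2 \<in> ?S"
  show "(Z1, Z2) \<in> (adj {e\<in>?G. e \<subseteq> ?S})\<^sup>*"
  proof (cases "X \<in> ?S")
    case False
    then have "Z1 \<in> ?S'" "Z2 \<in> ?S'" using Z by auto
    then show ?thesis by (rule old)
  next
    case True
    then have vY: "Y \<in> ?S" "Y \<in> ?S'" using sub Y by auto
    have toY: "(Z, Y) \<in> (adj {e\<in>?G. e \<subseteq> ?S})\<^sup>*" if "Z \<in> ?S" for Z
    proof (cases "Z = X")
      case True
      then have "(Z, Y) \<in> adj {e\<in>?G. e \<subseteq> ?S}" using \<open>X \<in> ?S\<close> vY by (simp add: adj_def)
      then show ?thesis by (rule r_into_rtrancl)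
    next
      case False
      then have "Z \<in> ?S'" using that by auto
      then show ?thesis using vY(2) by (rule old)
    qed
    have a: "(Z1, Y) \<in> (adj {e\<in>?G. e \<subseteq> ?S})\<^sup>*" by (rule toY[OF Z(1)])
    have "(Z2, Y) \<in> (adj {e\<in>?G. e \<subseteq> ?S})\<^sup>*" by (rule toY[OF Z(2)])
    then have b: "(Y, Z2) \<in> (adj {e\<in>?G. e \<subseteq> ?S})\<^sup>*" by (rule rtr_sym)
    show ?thesis using a b by (rule rtrancl_trans)
  qed
qed

lemma jp_triv:
  assumes "\<not> (\<exists>Z1\<in>E. \<exists>Z2\<in>E. Z1 \<noteq> Z2 \<and> v \<in> Z1 \<and> v \<in> Z2)"
  shows "jp E T v"
  unfolding jp_def
proof (intro ballI)
  fix Z1 Z2 assume "Z1 \<in> {X\<in>E. v \<in> X}" "Z2 \<in> {X\<in>E. v \<in> X}"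
  then have "Z1 = Z2" using assms by blast
  then show "(Z1, Z2) \<in> (adj {e\<in>T. e \<subseteq> {X\<in>E. v \<in> X}})\<^sup>*" by simp
qed

lemma gyo:
  "finite E \<Longrightarrow> finite U \<Longrightarrow> (\<exists>T. is_tree E T \<and> (\<forall>v\<in>U. jp E T v)) \<or> bad E U"
proof (induction "card E + card U" arbitrary: E U rule: less_induct)
  case less
  show ?case
  proof (cases "\<exists>Z1\<in>E. \<exists>Z2\<in>E. Z1 \<noteq> Z2")
    case False
    have "is_tree E {}" unfolding is_tree_def using False by (auto simp: adj_def)
    moreover have "jp E {} v" for v by (rule jp_triv) (use False in blast)
    ultimately show ?thesis by blast
  next
    case two: True
    show ?thesis
    proof (cases "\<exists>X\<in>E. \<exists>Y\<in>E. X \<noteq> Y \<and> X \<inter> U \<subseteq> Y \<inter> U")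
      case True
      then obtain X Y where XY: "X \<in> E" "Y \<in> E" "X \<noteq> Y" "X \<inter> U \<subseteq> Y \<inter> U" by blast
      have c: "card (E - {X}) + card U < card E + card U"
        using card_Diff1_less[OF less.prems(1) XY(1)] by simp
      have f: "finite (E - {X})" using less.prems(1) by simp
      have ih: "(\<exists>T. is_tree (E - {X}) T \<and> (\<forall>v\<in>U. jp (E - {X}) T v)) \<or> bad (E - {X}) U"
        by (rule less.hyps[OF c f less.prems(2)])
      have EX: "insert X (E - {X}) = E" using XY(1) by blast
      have YE: "Y \<in> E - {X}" using XY by simp
      show ?thesis
      proof (cases "bad (E - {X}) U")
        case False
        then obtain T where T: "is_tree (E - {X}) T" "\<forall>v\<in>U. jp (E - {X}) T v" using ih by blast
        have "is_tree (insert X (E - {X})) (insert {X, Y} T)" by (rule tree_ext[OF T(1) _ YE]) simp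
        then have "is_tree E (insert {X, Y} T)" unfolding EX .
        moreover have "jp E (insert {X, Y} T) v" if "v \<in> U" for v
        proof -
          have "jp (insert X (E - {X})) (insert {X, Y} T) v"
            by (rule jp_ext[OF T(2)[rule_format, OF that] _ YE]) (use XY(4) that in auto)
          then show ?thesis using EX by simp
        qed
        ultimately show ?thesis by blast
      next
        case True
        then obtain V' M where b: "V' \<subseteq> U" "badVM (E - {X}) V' M" unfolding bad_def by blast
        have "X \<inter> V' \<subseteq> Y \<inter> V'" using XY(4) b(1) by blast
        then have "badVM (insert X (E - {X})) V' M" by (rule badVM_ext[OF b(2) _ YE])
        then have "badVM E V' M" unfolding EX .
        then have "bad E U" unfolding bad_def using b(1) by blast
        then show ?thesis by blast
      qed
    next
      case noc: False
      show ?thesis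
      proof (cases "\<exists>v\<in>U. \<not> (\<exists>Z1\<in>E. \<exists>Z2\<in>E. Z1 \<noteq> Z2 \<and> v \<in> Z1 \<and> v \<in> Z2)")
        case True
        then obtain v where v: "v \<in> U" "\<not> (\<exists>Z1\<in>E. \<exists>Z2\<in>E. Z1 \<noteq> Z2 \<and> v \<in> Z1 \<and> v \<in> Z2)" by blast
        have c: "card E + card (U - {v}) < card E + card U"
          using card_Diff1_less[OF less.prems(2) v(1)] by simp
        have f: "finite (U - {v})" using less.prems(2) by simp
        have ih: "(\<exists>T. is_tree E T \<and> (\<forall>v\<in>U - {v}. jp E T v)) \<or> bad E (U - {v})"
          by (rule less.hyps[OF c less.prems(1) f])
        show ?thesis
        proof (cases "bad E (U - {v})")
          case True
          then obtain V' M where "V' \<subseteq> U - {v}" "badVM E V' M" unfolding bad_def by blast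
          then have "V' \<subseteq> U" "badVM E V' M" by auto
          then have "bad E U" unfolding bad_def by blast
          then show ?thesis by blast
        next
          case False
          then obtain T where T: "is_tree E T" "\<forall>u\<in>U - {v}. jp E T u" using ih by blast
          have "jp E T v" by (rule jp_triv[OF v(2)])
          then have "\<forall>u\<in>U. jp E T u" using T(2) by blast
          then show ?thesis using T(1) by blast
        qed
      next
        case False
        let ?M = "(\<lambda>X. X \<inter> U) ` E"
        have noc': "X = X'" if "X \<in> E" "X' \<in> E" "X \<inter> U \<subseteq> X' \<inter> U" for X X'
          using noc that by blast
        have "badVM E U ?M"
          unfolding badVM_def
        proof (intro conjI)
          show "finite U" "finite ?M" using less.prems by auto
          show "?M \<noteq> {}" using two by blast
          show "\<forall>Y\<in>?M. Y \<noteq> {} \<and> Y \<subseteq> U"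
          proof
            fix Y assume "Y \<in> ?M"
            then obtain X where X: "X \<in> E" "Y = X \<inter> U" by blast
            obtain X' where "X' \<in> E" "X' \<noteq> X" using two X(1) by blast
            then have "\<not> X \<inter> U \<subseteq> X' \<inter> U" using noc'[OF X(1)] by blast
            then have "X \<inter> U \<noteq> {}" by auto
            then show "Y \<noteq> {} \<and> Y \<subseteq> U" using X(2) by simp
          qed
          show "\<forall>Y\<in>?M. \<forall>Y'\<in>?M. Y \<subseteq> Y' \<longrightarrow> Y = Y'"
          proof (intro ballI impI)
            fix Y Y' assume "Y \<in> ?M" "Y' \<in> ?M" "Y \<subseteq> Y'"
            then obtain X X' where XX: "X \<in> E" "X' \<in> E" "Y = X \<inter> U" "Y' = X' \<inter> U"
              by blast
            then have "X = X'" using noc'[OF XX(1,2)] \<open>Y \<subseteq> Y'\<close> by simp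
            then show "Y = Y'" using XX by simp
          qed
          show "\<forall>v\<in>U. \<exists>Y1\<in>?M. \<exists>Y2\<in>?M. Y1 \<noteq> Y2 \<and> v \<in> Y1 \<and> v \<in> Y2"
          proof
            fix v assume v: "v \<in> U"
            then obtain Z1 Z2 where Z: "Z1 \<in> E" "Z2 \<in> E" "Z1 \<noteq> Z2" "v \<in> Z1" "v \<in> Z2"
              using False by blast
            then have "Z1 \<inter> U \<noteq> Z2 \<inter> U" using noc'[OF Z(1,2)] by auto
            moreover have "Z1 \<inter> U \<in> ?M" "Z2 \<inter> U \<in> ?M" using Z by auto
            ultimately show "\<exists>Y1\<in>?M. \<exists>Y2\<in>?M. Y1 \<noteq> Y2 \<and> v \<in> Y1 \<and> v \<in> Y2"
              using Z v by (intro bexI[where x="Z1 \<inter> U"] bexI[where x="Z2 \<inter> U"] conjI) auto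
          qed
          show "\<forall>X\<in>E. \<exists>Y\<in>?M. X \<inter> U \<subseteq> Y"
          proof
            fix X assume "X \<in> E"
            then show "\<exists>Y\<in>?M. X \<inter> U \<subseteq> Y" by (intro bexI[where x="X \<inter> U"]) auto
          qed
          show "\<forall>Y\<in>?M. \<exists>X\<in>E. X \<inter> U = Y" by auto
        qed
        then have "bad E U" unfolding bad_def by (intro exI[where x=U] exI[where x="?M"]) simp
        then show ?thesis by blast
      qed
    qed
  qed
qed

locale cex =
  fixes enc :: "nat \<Rightarrow> 'v" and a :: "'k::comm_monoid_add" and V' :: "'a set"
    and M :: "'a set set" and c :: "'a set \<Rightarrow> 'a \<Rightarrow> nat" and Y0 :: "'a set"
  assumes enc_inj: "inj enc" and a_nz: "a \<noteq> 0" and pos: "positive_monoid TYPE('k)"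
    and finV: "finite V'" and finM: "finite M" and Y0: "Y0 \<in> M"
    and Mne: "\<forall>Y\<in>M. Y \<noteq> {} \<and> Y \<subseteq> V'" and anti: "\<forall>Y\<in>M. \<forall>Y'\<in>M. Y \<subseteq> Y' \<longrightarrow> Y = Y'"
    and cunit: "\<forall>Y\<in>M. \<forall>v\<in>Y. c Y v = 1 \<or> c Y v = 2"
    and csum: "\<forall>v\<in>V'. 3 dvd (\<Sum>Y\<in>{Y\<in>M. v \<in> Y}. c Y v)"
begin

definition bb :: "'a set \<Rightarrow> nat" where "bb Y = (if Y = Y0 then 1 else 0)"
definition nmul :: "nat \<Rightarrow> 'k" where "nmul w = (\<Sum>i<w. a)"
definition valid :: "'a set \<Rightarrow> ('a \<rightharpoonup> 'v) \<Rightarrow> bool" where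
  "valid A t \<longleftrightarrow> dom t = A \<and> (\<forall>v\<in>A. \<exists>k<3. t v = Some (enc k))"
definition val :: "('a \<rightharpoonup> 'v) \<Rightarrow> 'a \<Rightarrow> nat" where "val t v = inv enc (the (t v))"
definition eqn :: "'a set \<Rightarrow> ('a \<rightharpoonup> 'v) \<Rightarrow> bool" where
  "eqn Y t \<longleftrightarrow> (\<Sum>v\<in>Y. c Y v * val t v) mod 3 = bb Y"
definition nn :: nat where "nn = card V'"
definition P :: "'a set \<Rightarrow> ('a \<rightharpoonup> 'v) \<Rightarrow> 'k" where
  "P Y t = (if valid Y t \<and> eqn Y t then nmul (3 ^ (nn - card Y)) else 0)"
definition Uw :: "'a set \<Rightarrow> nat \<Rightarrow> ('a \<rightharpoonup> 'v) \<Rightarrow> 'k" where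
  "Uw A w t = (if valid A t then nmul w else 0)"

lemma val_enc: "k < 3 \<Longrightarrow> t v = Some (enc k) \<Longrightarrow> val t v = k"
  unfolding val_def using enc_inj by (simp add: inv_f_f)

lemma valid_val: "valid A t \<Longrightarrow> v \<in> A \<Longrightarrow> val t v < 3 \<and> t v = Some (enc (val t v))"
proof -
  assume "valid A t" "v \<in> A"
  then obtain k where k: "k < 3" "t v = Some (enc k)" unfolding valid_def by blast
  then have "val t v = k" by (rule val_enc)
  then show ?thesis using k by simp
qed

lemma finite_valid: "finite A \<Longrightarrow> finite {t. valid A t}"
proof -
  assume fA: "finite A"
  have "{t. valid A t} \<subseteq> {m. dom m = A \<and> ran m \<subseteq> enc ` {..<3}}"
  proof
    fix t assume "t \<in> {t. valid A t}"
    then have vt: "valid A t" by simp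
    have "ran t \<subseteq> enc ` {..<3}"
    proof
      fix y assume "y \<in> ran t"
      then obtain v where v: "t v = Some y" unfolding ran_def by blast
      then have "v \<in> A" using vt unfolding valid_def by auto
      then obtain k where "k < 3" "t v = Some (enc k)" using vt unfolding valid_def by blast
      then show "y \<in> enc ` {..<3}" using v by auto
    qed
    then show "t \<in> {m. dom m = A \<and> ran m \<subseteq> enc ` {..<3}}" using vt unfolding valid_def by simp
  qed
  moreover have "finite {m. dom m = A \<and> ran m \<subseteq> enc ` {..<3}}"
    by (rule finite_set_of_finite_maps[OF fA]) simp
  ultimately show ?thesis by (rule finite_subset)
qed

lemma valid_restrict: "valid B r \<Longrightarrow> A \<subseteq> B \<Longrightarrow> valid A (r |` A)"
  unfolding valid_def by auto

lemma sum_const_nmul: "finite T \<Longrightarrow> (\<Sum>x\<in>T. a) = nmul (card T)"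
proof -
  assume fT: "finite T"
  obtain h where h: "bij_betw h {0..<card T} T" using ex_bij_betw_nat_finite[OF fT] by blast
  have "(\<Sum>x\<in>{0..<card T}. a) = (\<Sum>x\<in>T. a)" using sum.reindex_bij_betw[OF h, of "\<lambda>_. a"] by simp
  then show ?thesis unfolding nmul_def by (simp add: atLeast0LessThan)
qed

lemma nmul_card: "finite S \<Longrightarrow> (\<Sum>x\<in>S. nmul w) = nmul (card S * w)"
proof -
  assume fS: "finite S"
  have "(\<Sum>x\<in>S. nmul w) = (\<Sum>x\<in>S. \<Sum>i\<in>{..<w}. a)" unfolding nmul_def by simp
  also have "\<dots> = (\<Sum>p\<in>S \<times> {..<w}. a)" by (rule sum.cartesian_product'[symmetric])
  also have "\<dots> = nmul (card (S \<times> {..<w}))" by (rule sum_const_nmul) (use fS in simp)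
  also have "\<dots> = nmul (card S * w)" by (simp add: card_cartesian_product)
  finally show ?thesis .
qed

lemma nmul_nz: "0 < w \<Longrightarrow> nmul w \<noteq> 0"
  unfolding nmul_def using pos_sum_nz[OF pos, of "{..<w}" 0 "\<lambda>_. a"] a_nz by simp

lemma krel_Uw: "finite A \<Longrightarrow> is_krel A (Uw A w)"
proof -
  assume fA: "finite A"
  have "{t. Uw A w t \<noteq> 0} \<subseteq> {t. valid A t}" unfolding Uw_def by auto
  then have "finite {t. Uw A w t \<noteq> 0}" using finite_valid[OF fA] finite_subset by blast
  moreover have "Uw A w t \<noteq> 0 \<Longrightarrow> dom t = A" for t unfolding Uw_def valid_def by (auto split: if_splits)
  ultimately show ?thesis unfolding is_krel_def by blast
qed

lemma YV: "Y \<in> M \<Longrightarrow> Y \<subseteq> V'"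
  using Mne by blast

lemma finY: "Y \<in> M \<Longrightarrow> finite Y"
  using YV finV by (rule finite_subset)

lemma krel_P: "Y \<in> M \<Longrightarrow> is_krel Y (P Y)"
proof -
  assume Y: "Y \<in> M"
  have "{t. P Y t \<noteq> 0} \<subseteq> {t. valid Y t}" unfolding P_def by auto
  then have "finite {t. P Y t \<noteq> 0}" using finite_valid[OF finY[OF Y]] finite_subset by blast
  moreover have "P Y t \<noteq> 0 \<Longrightarrow> dom t = Y" for t unfolding P_def valid_def by (auto split: if_splits)
  ultimately show ?thesis unfolding is_krel_def by blast
qed

lemma ext1:
  assumes t: "valid (B - {d}) t" and d: "d \<in> B"
  shows "{r. valid B r \<and> r |` (B - {d}) = t} = (\<lambda>k. t(d \<mapsto> enc k)) ` {..<3}"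
proof
  show "{r. valid B r \<and> r |` (B - {d}) = t} \<subseteq> (\<lambda>k. t(d \<mapsto> enc k)) ` {..<3}"
  proof
    fix r assume r: "r \<in> {r. valid B r \<and> r |` (B - {d}) = t}"
    then have vr: "valid B r" and rt: "r |` (B - {d}) = t" by auto
    obtain k where k: "k < 3" "r d = Some (enc k)" using vr d unfolding valid_def by blast
    have "r = t(d \<mapsto> enc k)"
    proof (rule ext)
      fix x
      show "r x = (t(d \<mapsto> enc k)) x"
      proof (cases "x = d")
        case True then show ?thesis using k by simp
      next
        case False
        have "t x = (r |` (B - {d})) x" using rt by simp
        moreover have "x \<notin> B \<Longrightarrow> r x = None" using vr unfolding valid_def by auto
        ultimately show ?thesis using False by (cases "x \<in> B") (auto simp: restrict_map_def)
      qed
    qed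
    then show "r \<in> (\<lambda>k. t(d \<mapsto> enc k)) ` {..<3}" using k by (intro image_eqI[where x=k]) simp_all
  qed
next
  show "(\<lambda>k. t(d \<mapsto> enc k)) ` {..<3} \<subseteq> {r. valid B r \<and> r |` (B - {d}) = t}"
  proof
    fix r assume "r \<in> (\<lambda>k. t(d \<mapsto> enc k)) ` {..<3}"
    then obtain k where k: "k < 3" "r = t(d \<mapsto> enc k)" by blast
    have dt: "dom t = B - {d}" using t unfolding valid_def by simp
    have "valid B r" using t k d unfolding valid_def by auto
    moreover have "r |` (B - {d}) = t"
    proof (rule ext)
      fix x show "(r |` (B - {d})) x = t x"
        using k dt by (cases "x \<in> B - {d}") (auto simp: restrict_map_def)
    qed
    ultimately show "r \<in> {r. valid B r \<and> r |` (B - {d}) = t}" by blast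
  qed
qed

lemma ext1_inj: "inj_on (\<lambda>k. t(d \<mapsto> enc k)) K"
proof
  fix x y assume "t(d \<mapsto> enc x) = t(d \<mapsto> enc y)"
  then have "enc x = enc y" by (metis fun_upd_same option.inject)
  then show "x = y" using enc_inj by (simp add: inj_eq)
qed

lemma marg_Uw1:
  assumes fB: "finite B" and d: "d \<in> B"
  shows "marginal (Uw B w) (B - {d}) = Uw (B - {d}) (3 * w)"
proof
  fix t
  have sub: "{r. Uw B w r \<noteq> 0} \<subseteq> {r. valid B r}" unfolding Uw_def by auto
  have "marginal (Uw B w) (B - {d}) t = sum (Uw B w) {r\<in>{r. valid B r}. r |` (B - {d}) = t}"
    by (rule marginal_alt[OF finite_valid[OF fB] sub])
  also have "\<dots> = (\<Sum>r\<in>{r. valid B r \<and> r |` (B - {d}) = t}. nmul w)"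
    by (rule sum.cong) (auto simp: Uw_def)
  also have "\<dots> = Uw (B - {d}) (3 * w) t"
  proof (cases "valid (B - {d}) t")
    case True
    have "(\<Sum>r\<in>{r. valid B r \<and> r |` (B - {d}) = t}. nmul w) = (\<Sum>r\<in>(\<lambda>k. t(d \<mapsto> enc k)) ` {..<3}. nmul w)"
      unfolding ext1[OF True d] ..
    also have "\<dots> = nmul (card ((\<lambda>k. t(d \<mapsto> enc k)) ` {..<3}) * w)" by (rule nmul_card) simp
    also have "card ((\<lambda>k. t(d \<mapsto> enc k)) ` {..<3}) = 3"
      using card_image[OF ext1_inj[of t d "{..<3}"]] by simp
    finally show ?thesis using True unfolding Uw_def by simp
  next
    case False
    have "{r. valid B r \<and> r |` (B - {d}) = t} = {}"
    proof (rule ccontr)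
      assume "{r. valid B r \<and> r |` (B - {d}) = t} \<noteq> {}"
      then obtain r where "valid B r" "r |` (B - {d}) = t" by blast
      then have "valid (B - {d}) t" using valid_restrict[of B r "B - {d}"] by auto
      then show False using False by simp
    qed
    then show ?thesis using False unfolding Uw_def by (simp only:) simp
  qed
  finally show "marginal (Uw B w) (B - {d}) t = Uw (B - {d}) (3 * w) t" .
qed

lemma marg_Uw:
  "finite B \<Longrightarrow> A \<subseteq> B \<Longrightarrow> marginal (Uw B w) A = Uw A (3 ^ card (B - A) * w)"
proof (induction "card (B - A)" arbitrary: B w)
  case 0
  then have "B = A" by auto
  then show ?case using marginal_self[OF krel_Uw[OF 0(2)]] 0 by simp
next
  case (Suc k)
  then have "B - A \<noteq> {}" by auto
  then obtain d where d: "d \<in> B - A" by blast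
  have fB': "finite (B - {d})" using Suc.prems by simp
  have AB': "A \<subseteq> B - {d}" using Suc.prems d by auto
  have "B - {d} - A = (B - A) - {d}" by blast
  then have ck: "k = card (B - {d} - A)"
    using card_Diff_singleton[OF d] Suc.hyps(2) Suc.prems(1) by simp
  have "marginal (Uw B w) A = marginal (marginal (Uw B w) (B - {d})) A"
    by (rule marginal_trans[OF krel_Uw[OF Suc.prems(1)] AB', symmetric])
  also have "\<dots> = marginal (Uw (B - {d}) (3 * w)) A" using marg_Uw1[OF Suc.prems(1)] d by simp
  also have "\<dots> = Uw A (3 ^ card (B - {d} - A) * (3 * w))" by (rule Suc.hyps(1)[OF ck fB' AB'])
  also have "3 ^ card (B - {d} - A) * (3 * w) = 3 ^ card (B - A) * (w::nat)"
    using ck Suc.hyps(2) by (metis mult.assoc mult.commute power_Suc)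
  finally show ?case .
qed

end

lemma three_sum_aux:
  fixes x :: "'k::comm_monoid_add"
  assumes "m < 3" "(c0::nat) = 1 \<or> c0 = 2" "bY < (3::nat)"
  shows "(\<Sum>k<3. if (c0 * k + m) mod 3 = bY then x else 0) = x"
proof -
  have e: "{..<3::nat} = {0, 1, 2}" by auto
  have "m = 0 \<or> m = 1 \<or> m = 2" "bY = 0 \<or> bY = 1 \<or> bY = 2" using assms by auto
  then show ?thesis unfolding e using assms(2) by (elim disjE) simp_all
qed

lemma three_sum:
  fixes x :: "'k::comm_monoid_add"
  assumes "(c0::nat) = 1 \<or> c0 = 2" "bY < (3::nat)"
  shows "(\<Sum>k<3. if (c0 * k + s) mod 3 = bY then x else 0) = x"
proof -
  have "(c0 * k + s) mod 3 = (c0 * k + s mod 3) mod 3" for k by (simp add: mod_add_right_eq)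
  then have "(\<Sum>k<3. if (c0 * k + s) mod 3 = bY then x else 0) =
     (\<Sum>k<3. if (c0 * k + s mod 3) mod 3 = bY then x else 0)" by simp
  also have "\<dots> = x" by (rule three_sum_aux) (use assms in simp_all)
  finally show ?thesis .
qed

context cex
begin

lemma val_upd_same: "k < 3 \<Longrightarrow> val (t(v0 \<mapsto> enc k)) v0 = k"
  by (rule val_enc) simp_all

lemma val_upd_other: "v \<noteq> v0 \<Longrightarrow> val (t(v0 \<mapsto> x)) v = val t v"
  unfolding val_def by simp

lemma eqn_upd:
  assumes Y: "Y \<in> M" and v0: "v0 \<in> Y" and k: "k < 3"
  shows "eqn Y (t(v0 \<mapsto> enc k)) \<longleftrightarrow>
    (c Y v0 * k + (\<Sum>v\<in>Y - {v0}. c Y v * val t v)) mod 3 = bb Y"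
proof -
  have "(\<Sum>v\<in>Y. c Y v * val (t(v0 \<mapsto> enc k)) v) =
      c Y v0 * val (t(v0 \<mapsto> enc k)) v0 + (\<Sum>v\<in>Y - {v0}. c Y v * val (t(v0 \<mapsto> enc k)) v)"
    by (rule sum.remove[OF finY[OF Y] v0])
  also have "\<dots> = c Y v0 * k + (\<Sum>v\<in>Y - {v0}. c Y v * val t v)"
    using val_upd_same[OF k] val_upd_other by simp
  finally show ?thesis unfolding eqn_def by simp
qed

lemma marg_P1:
  assumes Y: "Y \<in> M" and v0: "v0 \<in> Y"
  shows "marginal (P Y) (Y - {v0}) = Uw (Y - {v0}) (3 ^ (nn - card Y))"
proof
  fix t
  let ?w = "nmul (3 ^ (nn - card Y))"
  have fY: "finite Y" by (rule finY[OF Y])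
  have sub: "{r. P Y r \<noteq> 0} \<subseteq> {r. valid Y r}" unfolding P_def by auto
  have "marginal (P Y) (Y - {v0}) t = sum (P Y) {r\<in>{r. valid Y r}. r |` (Y - {v0}) = t}"
    by (rule marginal_alt[OF finite_valid[OF fY] sub])
  also have "\<dots> = sum (P Y) {r. valid Y r \<and> r |` (Y - {v0}) = t}" by simp
  also have "\<dots> = Uw (Y - {v0}) (3 ^ (nn - card Y)) t"
  proof (cases "valid (Y - {v0}) t")
    case True
    let ?S = "\<Sum>v\<in>Y - {v0}. c Y v * val t v"
    have "sum (P Y) {r. valid Y r \<and> r |` (Y - {v0}) = t} = sum (P Y) ((\<lambda>k. t(v0 \<mapsto> enc k)) ` {..<3})"
      unfolding ext1[OF True v0] ..
    also have "\<dots> = (\<Sum>k<3. P Y (t(v0 \<mapsto> enc k)))"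
      by (rule sum.reindex[OF ext1_inj, unfolded comp_def])
    also have "\<dots> = (\<Sum>k<3. if (c Y v0 * k + ?S) mod 3 = bb Y then ?w else 0)"
    proof (rule sum.cong[OF refl])
      fix k :: nat assume "k \<in> {..<3}"
      then have k: "k < 3" by simp
      have "t(v0 \<mapsto> enc k) \<in> (\<lambda>k. t(v0 \<mapsto> enc k)) ` {..<3}" using k by blast
      then have "valid Y (t(v0 \<mapsto> enc k))" unfolding ext1[OF True v0, symmetric] by blast
      then show "P Y (t(v0 \<mapsto> enc k)) = (if (c Y v0 * k + ?S) mod 3 = bb Y then ?w else 0)"
        unfolding P_def using eqn_upd[OF Y v0 k, of t] by simp
    qed
    also have "\<dots> = ?w"
      by (rule three_sum) (use cunit Y v0 in \<open>auto simp: bb_def\<close>)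
    finally show ?thesis using True unfolding Uw_def by simp
  next
    case False
    have e: "{r. valid Y r \<and> r |` (Y - {v0}) = t} = {}"
    proof (rule ccontr)
      assume "{r. valid Y r \<and> r |` (Y - {v0}) = t} \<noteq> {}"
      then obtain r where "valid Y r" "r |` (Y - {v0}) = t" by blast
      then have "valid (Y - {v0}) t" using valid_restrict[of Y r "Y - {v0}"] by auto
      then show False using False by simp
    qed
    show ?thesis unfolding e using False unfolding Uw_def by simp
  qed
  finally show "marginal (P Y) (Y - {v0}) t = Uw (Y - {v0}) (3 ^ (nn - card Y)) t" .
qed

lemma cardY: "Y \<in> M \<Longrightarrow> card Y \<le> nn"
  unfolding nn_def using YV finV card_mono by blast

lemma marg_P:
  assumes Y: "Y \<in> M" and AY: "A \<subseteq> Y" "A \<noteq> Y"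
  shows "marginal (P Y) A = Uw A (3 ^ (nn - card A - 1))"
proof -
  obtain v0 where v0: "v0 \<in> Y" "v0 \<notin> A" using AY by blast
  have fY: "finite Y" by (rule finY[OF Y])
  have A': "A \<subseteq> Y - {v0}" using AY v0 by blast
  have "marginal (P Y) A = marginal (marginal (P Y) (Y - {v0})) A"
    by (rule marginal_trans[OF krel_P[OF Y] A', symmetric])
  also have "\<dots> = marginal (Uw (Y - {v0}) (3 ^ (nn - card Y))) A" using marg_P1[OF Y v0(1)] by simp
  also have "\<dots> = Uw A (3 ^ card (Y - {v0} - A) * 3 ^ (nn - card Y))"
    by (rule marg_Uw[OF _ A']) (use fY in simp)
  also have "3 ^ card (Y - {v0} - A) * 3 ^ (nn - card Y) = (3::nat) ^ (nn - card A - 1)"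
  proof -
    have fA: "finite A" using fY AY finite_subset by blast
    have c1: "card (Y - {v0} - A) = card (Y - {v0}) - card A" by (rule card_Diff_subset[OF fA A'])
    have c2: "card (Y - {v0}) = card Y - 1" by (rule card_Diff_singleton[OF v0(1)])
    have "card A < card Y" using fY AY psubset_card_mono by blast
    moreover have "card Y \<le> nn" by (rule cardY[OF Y])
    ultimately have "card (Y - {v0} - A) + (nn - card Y) = nn - card A - 1" using c1 c2 by simp
    then show ?thesis by (metis power_add)
  qed
  finally show ?thesis .
qed

definition Can :: "'a set \<Rightarrow> ('a \<rightharpoonup> 'v) \<Rightarrow> 'k" where
  "Can A = (if A \<in> M then P A else Uw A (3 ^ (nn - card A - 1)))"

lemma Can_marg:
  assumes Y: "Y \<in> M" and B: "B \<subseteq> Y"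
  shows "marginal (P Y) B = Can B"
proof (cases "B = Y")
  case True
  then show ?thesis using marginal_self[OF krel_P[OF Y]] Y unfolding Can_def by simp
next
  case False
  then have "B \<notin> M" using anti Y B by blast
  then show ?thesis using marg_P[OF Y B False] unfolding Can_def by simp
qed

lemma krel_Can:
  assumes Y: "Y \<in> M" and B: "B \<subseteq> Y"
  shows "is_krel B (Can B)"
  using marginal_krel[OF krel_P[OF Y] B] Can_marg[OF Y B] by simp

lemma Can_marg2:
  assumes Y: "Y \<in> M" and AB: "A \<subseteq> B" and B: "B \<subseteq> Y"
  shows "marginal (Can B) A = Can A"
proof -
  have "marginal (Can B) A = marginal (marginal (P Y) B) A" using Can_marg[OF Y B] by simp
  also have "\<dots> = marginal (P Y) A" by (rule marginal_trans[OF krel_P[OF Y] AB])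
  also have "\<dots> = Can A" by (rule Can_marg[OF Y]) (use AB B in blast)
  finally show ?thesis .
qed

end

context cex
begin

definition good :: "'a set \<Rightarrow> ('a \<rightharpoonup> 'v) \<Rightarrow> bool" where
  "good D t \<longleftrightarrow> dom t = D \<and> (\<forall>u\<in>D - V'. t u = Some (enc 0))"
definition lift :: "'a set \<Rightarrow> (('a \<rightharpoonup> 'v) \<Rightarrow> 'k) \<Rightarrow> ('a \<rightharpoonup> 'v) \<Rightarrow> 'k" where
  "lift D Q t = (if good D t then Q (t |` V') else 0)"
definition extd :: "'a set \<Rightarrow> ('a \<rightharpoonup> 'v) \<Rightarrow> ('a \<rightharpoonup> 'v)" where
  "extd D s = (\<lambda>u. if u \<in> D - V' then Some (enc 0) else s u)"

lemma good_extd: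
  assumes "dom s = D \<inter> V'"
  shows "good D (extd D s)" "extd D s |` V' = s"
proof -
  have "dom (extd D s) = D"
  proof
    show "dom (extd D s) \<subseteq> D"
    proof
      fix u assume "u \<in> dom (extd D s)"
      then show "u \<in> D" using assms unfolding extd_def by (auto split: if_splits)
    qed
    show "D \<subseteq> dom (extd D s)"
    proof
      fix u assume "u \<in> D"
      show "u \<in> dom (extd D s)"
      proof (cases "u \<in> V'")
        case True
        then have "u \<in> dom s" using assms \<open>u \<in> D\<close> by simp
        then show ?thesis unfolding extd_def by auto
      next
        case False
        then show ?thesis using \<open>u \<in> D\<close> unfolding extd_def by auto
      qed
    qed
  qed
  then show "good D (extd D s)" unfolding good_def extd_def by simp
  show "extd D s |` V' = s"
  proof (rule ext)
    fix u show "(extd D s |` V') u = s u"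
    proof (cases "u \<in> V'")
      case True then show ?thesis unfolding extd_def by simp
    next
      case False
      then have "s u = None" using assms by auto
      then show ?thesis using False by simp
    qed
  qed
qed

lemma extd_good:
  assumes "good D r"
  shows "extd D (r |` V') = r"
proof (rule ext)
  fix u
  have dr: "dom r = D" and o: "\<forall>u\<in>D - V'. r u = Some (enc 0)" using assms unfolding good_def by auto
  show "extd D (r |` V') u = r u"
  proof (cases "u \<in> D - V'")
    case True then show ?thesis using o unfolding extd_def by simp
  next
    case False
    show ?thesis
    proof (cases "u \<in> V'")
      case True then show ?thesis using False unfolding extd_def by simp
    next
      case nV: False
      then have "u \<notin> D" using False by simp
      then have "r u = None" using dr by auto
      then show ?thesis using False nV unfolding extd_def by simp
    qed
  qed
qed

lemma good_restrict: "good D r \<Longrightarrow> D' \<subseteq> D \<Longrightarrow> good D' (r |` D')"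
  unfolding good_def by auto

lemma krel_lift:
  assumes Q: "is_krel (D \<inter> V') Q"
  shows "is_krel D (lift D Q)"
proof -
  have "{t. lift D Q t \<noteq> 0} \<subseteq> extd D ` {s. Q s \<noteq> 0}"
  proof
    fix t assume "t \<in> {t. lift D Q t \<noteq> 0}"
    then have g: "good D t" and q: "Q (t |` V') \<noteq> 0" unfolding lift_def by (auto split: if_splits)
    have "t = extd D (t |` V')" using extd_good[OF g] by simp
    then show "t \<in> extd D ` {s. Q s \<noteq> 0}" using q by blast
  qed
  moreover have "finite {s. Q s \<noteq> 0}" using Q by (simp add: is_krel_def)
  ultimately have "finite {t. lift D Q t \<noteq> 0}" using finite_subset by blast
  moreover have "lift D Q t \<noteq> 0 \<Longrightarrow> dom t = D" for t
    unfolding lift_def good_def by (auto split: if_splits)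
  ultimately show ?thesis unfolding is_krel_def by blast
qed

lemma lift_marg:
  assumes Q: "is_krel (D \<inter> V') Q" and D': "D' \<subseteq> D"
  shows "marginal (lift D Q) D' = lift D' (marginal Q (D' \<inter> V'))"
proof
  fix t
  let ?L = "{r. lift D Q r \<noteq> 0 \<and> r |` D' = t}"
  let ?R = "{s. Q s \<noteq> 0 \<and> s |` (D' \<inter> V') = t |` V'}"
  have gL: "good D r" "Q (r |` V') \<noteq> 0" if "r \<in> ?L" for r
    using that unfolding lift_def by (auto split: if_splits)
  show "marginal (lift D Q) D' t = lift D' (marginal Q (D' \<inter> V')) t"
  proof (cases "good D' t")
    case False
    have e: "?L = {}"
    proof (rule ccontr)
      assume "?L \<noteq> {}"
      then obtain r where r: "r \<in> ?L" by blast
      then have "good D' (r |` D')" using good_restrict[OF gL(1)[OF r] D'] by simp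
      then show False using False r by simp
    qed
    show ?thesis unfolding marginal_def e using False unfolding lift_def by simp
  next
    case True
    have domQ: "Q s \<noteq> 0 \<Longrightarrow> dom s = D \<inter> V'" for s using Q by (simp add: is_krel_def)
    have "marginal (lift D Q) D' t = sum (lift D Q) ?L" by (simp add: marginal_def)
    also have "\<dots> = sum Q ?R"
    proof (rule sum.reindex_bij_witness[where j = "\<lambda>r. r |` V'" and i = "extd D"])
      fix r assume r: "r \<in> ?L"
      show "extd D (r |` V') = r" by (rule extd_good[OF gL(1)[OF r]])
      have rt: "r |` D' = t" using r by simp
      have "r |` V' |` (D' \<inter> V') = r |` (D' \<inter> V')" by (simp add: Int_absorb1)
      moreover have "t |` V' = r |` (D' \<inter> V')" using rt by (auto simp: Int_commute)
      ultimately show "r |` V' \<in> ?R" using gL(2)[OF r] by simp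
      show "Q (r |` V') = lift D Q r" using gL(1)[OF r] unfolding lift_def by simp
    next
      fix s assume s: "s \<in> ?R"
      have ds: "dom s = D \<inter> V'" using s domQ by simp
      show "extd D s |` V' = s" by (rule good_extd(2)[OF ds])
      have g: "good D (extd D s)" by (rule good_extd(1)[OF ds])
      have "lift D Q (extd D s) = Q s" unfolding lift_def using g good_extd(2)[OF ds] by simp
      moreover have "extd D s |` D' = t"
      proof (rule ext)
        fix u
        have gt: "dom t = D'" "\<forall>u\<in>D' - V'. t u = Some (enc 0)" using True unfolding good_def by auto
        have st: "s |` (D' \<inter> V') = t |` V'" using s by simp
        show "(extd D s |` D') u = t u"
        proof (cases "u \<in> D'")
          case False
          then show ?thesis using gt(1) by auto
        next
          case uD: True
          show ?thesis
          proof (cases "u \<in> V'")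
            case False
            then show ?thesis using uD gt(2) D' unfolding extd_def by auto
          next
            case True
            have "(s |` (D' \<inter> V')) u = (t |` V') u" using st by simp
            then show ?thesis using True uD unfolding extd_def by simp
          qed
        qed
      qed
      ultimately show "extd D s \<in> ?L" using s by simp
    qed
    also have "\<dots> = marginal Q (D' \<inter> V') (t |` V')" by (simp add: marginal_def)
    also have "\<dots> = lift D' (marginal Q (D' \<inter> V')) t" unfolding lift_def using True by simp
    finally show ?thesis .
  qed
qed

end

context cex
begin

definition Rc :: "'a set \<Rightarrow> ('a \<rightharpoonup> 'v) \<Rightarrow> 'k" where
  "Rc X = lift X (Can (X \<inter> V'))"

lemma cex_main:
  assumes tp: "transportation_property TYPE('k)"
    and cover: "\<forall>X\<in>E. \<exists>Y\<in>M. X \<inter> V' \<subseteq> Y" and real: "\<forall>Y\<in>M. \<exists>X\<in>E. X \<inter> V' = Y"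
  shows "(\<forall>X\<in>E. is_krel X (Rc X)) \<and> pairwise_consistent E Rc \<and> \<not> globally_consistent E Rc"
proof -
  have krelC: "is_krel (X \<inter> V') (Can (X \<inter> V'))" if XE: "X \<in> E" for X
  proof -
    obtain Y where Y: "Y \<in> M" "X \<inter> V' \<subseteq> Y" using cover XE by blast
    show ?thesis by (rule krel_Can[OF Y])
  qed
  have krel: "is_krel X (Rc X)" if "X \<in> E" for X
    unfolding Rc_def by (rule krel_lift[OF krelC[OF that]])
  have mg: "marginal (Rc X) (X \<inter> X') = lift (X \<inter> X') (Can ((X \<inter> X') \<inter> V'))"
    if XE: "X \<in> E" "X \<inter> X' \<subseteq> X" for X X'
  proof -
    obtain Y where Y: "Y \<in> M" "X \<inter> V' \<subseteq> Y" using cover XE(1) by blast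
    have "marginal (Rc X) (X \<inter> X') = lift (X \<inter> X') (marginal (Can (X \<inter> V')) ((X \<inter> X') \<inter> V'))"
      unfolding Rc_def by (rule lift_marg[OF krelC[OF that(1)] that(2)])
    also have "marginal (Can (X \<inter> V')) ((X \<inter> X') \<inter> V') = Can ((X \<inter> X') \<inter> V')"
      by (rule Can_marg2[OF Y(1) _ Y(2)]) (use that in blast)
    finally show ?thesis .
  qed
  have pc: "pairwise_consistent E Rc"
    unfolding pairwise_consistent_def
  proof (intro ballI)
    fix X X' assume X: "X \<in> E" and X': "X' \<in> E"
    have m1: "marginal (Rc X) (X \<inter> X') = lift (X \<inter> X') (Can ((X \<inter> X') \<inter> V'))"
      by (rule mg[OF X]) blast
    have "marginal (Rc X') (X' \<inter> X) = lift (X' \<inter> X) (Can ((X' \<inter> X) \<inter> V'))"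
      by (rule mg[OF X']) blast
    then have m2: "marginal (Rc X') (X \<inter> X') = lift (X \<inter> X') (Can ((X \<inter> X') \<inter> V'))"
      by (simp add: Int_commute)
    show "\<exists>W. is_krel (X \<union> X') W \<and> marginal W X = Rc X \<and> marginal W X' = Rc X'"
      by (rule glue[OF pos tp krel[OF X] krel[OF X']]) (simp add: m1 m2)
  qed
  have ng: "\<not> globally_consistent E Rc"
  proof
    assume "globally_consistent E Rc"
    then obtain W where W: "is_krel (\<Union>E) W" "\<forall>X\<in>E. marginal W X = Rc X"
      unfolding globally_consistent_def by blast
    obtain X0 where X0: "X0 \<in> E" "X0 \<inter> V' = Y0" using real Y0 by blast
    obtain v0 where v0: "v0 \<in> Y0" using Mne Y0 by blast
    let ?B = "Y0 - {v0}"
    let ?w = "3 ^ (nn - card Y0)"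
    have Y0V: "Y0 \<subseteq> V'" using YV[OF Y0] .
    have BX: "?B \<subseteq> X0" using X0 by blast
    have "marginal W ?B = marginal (marginal W X0) ?B"
      by (rule marginal_trans[OF W(1) BX, symmetric])
    also have "\<dots> = marginal (Rc X0) ?B" using W(2) X0(1) by simp
    also have "\<dots> = lift ?B (marginal (Can (X0 \<inter> V')) (?B \<inter> V'))"
      unfolding Rc_def by (rule lift_marg[OF krelC[OF X0(1)] BX])
    also have "Can (X0 \<inter> V') = Can Y0" using X0(2) by simp
    also have "?B \<inter> V' = ?B" using Y0V by blast
    also have "Can Y0 = P Y0" using Y0 unfolding Can_def by simp
    also have "marginal (P Y0) ?B = Uw ?B ?w" by (rule marg_P1[OF Y0 v0])
    finally have mB: "marginal W ?B = lift ?B (Uw ?B ?w)" .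
    define z0 where "z0 = (\<lambda>u. if u \<in> ?B then Some (enc 0) else None)"
    have dz: "dom z0 = ?B" unfolding z0_def by (auto split: if_splits)
    have vz: "valid ?B z0" unfolding valid_def using dz by (auto simp: z0_def intro: exI[of _ 0])
    have gz: "good ?B z0" unfolding good_def using dz Y0V by auto
    have zV: "z0 |` V' = z0"
    proof (rule ext)
      fix u show "(z0 |` V') u = z0 u" using Y0V unfolding z0_def by (auto simp: restrict_map_def)
    qed
    have "lift ?B (Uw ?B ?w) z0 = nmul ?w" unfolding lift_def Uw_def using gz zV vz by simp
    then have "marginal W ?B z0 \<noteq> 0" using mB nmul_nz[of ?w] by simp
    from marginal_nz[OF this] obtain r where r: "W r \<noteq> 0" by blast
    have dr: "dom r = \<Union>E" using W(1) r by (simp add: is_krel_def)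
    have finW: "finite {r. W r \<noteq> 0}" using W(1) by (simp add: is_krel_def)
    have H: "(\<Sum>v\<in>Y. c Y v * val r v) mod 3 = bb Y" if Y: "Y \<in> M" for Y
    proof -
      obtain X where X: "X \<in> E" "X \<inter> V' = Y" using real Y by blast
      have "finite {r'. W r' \<noteq> 0 \<and> r' |` X = r |` X}" using finW by (rule finite_subset[rotated]) auto
      then have "marginal W X (r |` X) \<noteq> 0"
        unfolding marginal_def using pos_sum_nz[OF pos, of _ r W] r by simp
      then have "Rc X (r |` X) \<noteq> 0" using W(2) X(1) by simp
      then have "Can Y (r |` X |` V') \<noteq> 0" unfolding Rc_def lift_def X(2) by (simp split: if_splits)
      moreover have "r |` X |` V' = r |` Y" using X(2) by simp
      moreover have "Can Y = P Y" using Y unfolding Can_def by simp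
      ultimately have "P Y (r |` Y) \<noteq> 0" by simp
      then have "eqn Y (r |` Y)" unfolding P_def by (simp split: if_splits)
      moreover have "val (r |` Y) v = val r v" if "v \<in> Y" for v unfolding val_def using that by simp
      ultimately show ?thesis unfolding eqn_def by simp
    qed
    let ?g = "\<lambda>Y v. c Y v * val r v"
    have "(\<Sum>Y\<in>M. \<Sum>v\<in>Y. ?g Y v) mod 3 = (\<Sum>Y\<in>M. (\<Sum>v\<in>Y. ?g Y v) mod 3) mod 3"
      by (simp add: mod_sum_eq)
    also have "\<dots> = (\<Sum>Y\<in>M. bb Y) mod 3" using H by simp
    also have "(\<Sum>Y\<in>M. bb Y) = 1" unfolding bb_def using finM Y0 by simp
    finally have one: "(\<Sum>Y\<in>M. \<Sum>v\<in>Y. ?g Y v) mod 3 = 1" by simp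
    have "(\<Sum>Y\<in>M. \<Sum>v\<in>Y. ?g Y v) = (\<Sum>Y\<in>M. \<Sum>v\<in>{v\<in>V'. v \<in> Y}. ?g Y v)"
    proof (rule sum.cong[OF refl])
      fix Y assume "Y \<in> M"
      then have "{v\<in>V'. v \<in> Y} = Y" using YV by blast
      then show "(\<Sum>v\<in>Y. ?g Y v) = (\<Sum>v\<in>{v\<in>V'. v \<in> Y}. ?g Y v)" by simp
    qed
    also have "\<dots> = (\<Sum>v\<in>V'. \<Sum>Y\<in>{Y\<in>M. v \<in> Y}. ?g Y v)"
      by (rule sum.swap_restrict[OF finM finV])
    also have "\<dots> = (\<Sum>v\<in>V'. val r v * (\<Sum>Y\<in>{Y\<in>M. v \<in> Y}. c Y v))"
      by (simp add: sum_distrib_left mult.commute)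
    finally have eqs: "(\<Sum>Y\<in>M. \<Sum>v\<in>Y. ?g Y v) = (\<Sum>v\<in>V'. val r v * (\<Sum>Y\<in>{Y\<in>M. v \<in> Y}. c Y v))" .
    have "3 dvd (\<Sum>v\<in>V'. val r v * (\<Sum>Y\<in>{Y\<in>M. v \<in> Y}. c Y v))"
      by (rule dvd_sum) (use csum in auto)
    then have "(\<Sum>Y\<in>M. \<Sum>v\<in>Y. ?g Y v) mod 3 = 0" unfolding eqs by simp
    then show False using one by simp
  qed
  show ?thesis using krel pc ng by blast
qed

end

lemma coef_exists:
  assumes fS: "finite S" and y: "y1 \<in> S" "y2 \<in> S" "y1 \<noteq> y2"
  shows "\<exists>f. (\<forall>x\<in>S. f x = 1 \<or> f x = (2::nat)) \<and> 3 dvd (\<Sum>x\<in>S. f x)"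
proof -
  let ?R = "S - {y1} - {y2}"
  define m where "m = card ?R"
  define p where "p = (if m mod 3 = 2 then 2 else 1 :: nat)"
  define q where "q = (if m mod 3 = 0 then 2 else if m mod 3 = 1 then 1 else 2 :: nat)"
  define f where "f x = (if x = y1 then p else if x = y2 then q else 1)" for x
  have "(\<Sum>x\<in>S. f x) = f y1 + (\<Sum>x\<in>S - {y1}. f x)" by (rule sum.remove[OF fS y(1)])
  also have "(\<Sum>x\<in>S - {y1}. f x) = f y2 + (\<Sum>x\<in>?R. f x)"
    by (rule sum.remove) (use fS y in auto)
  also have "(\<Sum>x\<in>?R. f x) = (\<Sum>x\<in>?R. 1)" by (rule sum.cong) (auto simp: f_def)
  also have "\<dots> = m" unfolding m_def by simp
  finally have s: "(\<Sum>x\<in>S. f x) = p + q + m" using y(3) unfolding f_def by simp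
  have "3 dvd (p + q + m)" unfolding p_def q_def by presburger
  moreover have "\<forall>x\<in>S. f x = 1 \<or> f x = 2" unfolding f_def p_def q_def by auto
  ultimately show ?thesis using s by metis
qed

theorem corollary18:
  fixes E :: "'a set set"
  assumes "nontrivial_monoid TYPE('k::comm_monoid_add)"
    and "positive_monoid TYPE('k)"
    and "transportation_property TYPE('k)"
    and "infinite (UNIV :: 'v set)"
    and "hypergraph E"
  shows "acyclic_hypergraph E \<longleftrightarrow> local_to_global TYPE('k) TYPE('v) E"
proof
  have fE: "finite E" using assms(5) unfolding hypergraph_def by blast
  assume "acyclic_hypergraph E"
  then obtain T where jt: "join_tree E T" unfolding acyclic_hypergraph_def by blast
  show "local_to_global TYPE('k) TYPE('v) E"
    unfolding local_to_global_def
  proof (intro allI impI)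
    fix R :: "'a set \<Rightarrow> ('a \<rightharpoonup> 'v) \<Rightarrow> 'k"
    assume k: "\<forall>X\<in>E. is_krel X (R X)" and p: "pairwise_consistent E R"
    show "globally_consistent E R" by (rule acyclic_glob[OF assms(2) assms(3) fE jt k p])
  qed
next
  assume ltg: "local_to_global TYPE('k) TYPE('v) E"
  show "acyclic_hypergraph E"
  proof (rule ccontr)
    assume nacy: "\<not> acyclic_hypergraph E"
    have fE: "finite E" using assms(5) unfolding hypergraph_def by blast
    have fU: "finite (\<Union>E)" using assms(5) unfolding hypergraph_def by blast
    have g: "(\<exists>T. is_tree E T \<and> (\<forall>v\<in>\<Union>E. jp E T v)) \<or> bad E (\<Union>E)" by (rule gyo[OF fE fU])
    have nt: "\<not> (\<exists>T. is_tree E T \<and> (\<forall>v\<in>\<Union>E. jp E T v))"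
    proof
      assume "\<exists>T. is_tree E T \<and> (\<forall>v\<in>\<Union>E. jp E T v)"
      then obtain T where T: "is_tree E T" "\<forall>v\<in>\<Union>E. jp E T v" by blast
      have "join_tree E T"
        unfolding join_tree_def Let_def
      proof (intro conjI allI ballI)
        show "is_tree E T" by (rule T(1))
      next
        fix v X Y assume X: "X \<in> {X\<in>E. v \<in> X}" and Y: "Y \<in> {X\<in>E. v \<in> X}"
        then have "v \<in> \<Union>E" by blast
        then have "jp E T v" using T(2) by blast
        then show "(X, Y) \<in> (adj {e\<in>T. e \<subseteq> {X\<in>E. v \<in> X}})\<^sup>*" using X Y unfolding jp_def by blast
      qed
      then show False using nacy unfolding acyclic_hypergraph_def by blast
    qed
    from g nt have "bad E (\<Union>E)" by blast
    then obtain V' M where b: "badVM E V' M" unfolding bad_def by blast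
    have finV: "finite V'" using b unfolding badVM_def by (elim conjE) assumption
    have finM: "finite M" using b unfolding badVM_def by (elim conjE) assumption
    have Mn: "M \<noteq> {}" using b unfolding badVM_def by (elim conjE) assumption
    have Mne: "\<forall>Y\<in>M. Y \<noteq> {} \<and> Y \<subseteq> V'" using b unfolding badVM_def by (elim conjE) assumption
    have anti: "\<forall>Y\<in>M. \<forall>Y'\<in>M. Y \<subseteq> Y' \<longrightarrow> Y = Y'" using b unfolding badVM_def by (elim conjE) assumption
    have two: "\<forall>v\<in>V'. \<exists>Y1\<in>M. \<exists>Y2\<in>M. Y1 \<noteq> Y2 \<and> v \<in> Y1 \<and> v \<in> Y2"
      using b unfolding badVM_def by (elim conjE) assumption
    have cover: "\<forall>X\<in>E. \<exists>Y\<in>M. X \<inter> V' \<subseteq> Y" using b unfolding badVM_def by (elim conjE) assumption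
    have real: "\<forall>Y\<in>M. \<exists>X\<in>E. X \<inter> V' = Y" using b unfolding badVM_def by (elim conjE) assumption
    obtain Y0 where Y0: "Y0 \<in> M" using Mn by blast
    obtain enc :: "nat \<Rightarrow> 'v" where enc: "inj enc"
      using infinite_countable_subset[OF assms(4)] by blast
    obtain x y :: 'k where "x \<noteq> y" using assms(1) unfolding nontrivial_monoid_def by blast
    then obtain a :: 'k where a: "a \<noteq> 0" by (cases "x = 0") auto
    have "\<forall>v\<in>V'. \<exists>f. (\<forall>Y\<in>{Y\<in>M. v \<in> Y}. f Y = 1 \<or> f Y = (2::nat)) \<and> 3 dvd (\<Sum>Y\<in>{Y\<in>M. v \<in> Y}. f Y)"
    proof
      fix v assume "v \<in> V'"
      then obtain Y1 Y2 where "Y1 \<in> M" "Y2 \<in> M" "Y1 \<noteq> Y2" "v \<in> Y1" "v \<in> Y2" using two by blast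
      then have "Y1 \<in> {Y\<in>M. v \<in> Y}" "Y2 \<in> {Y\<in>M. v \<in> Y}" "Y1 \<noteq> Y2" by auto
      moreover have "finite {Y\<in>M. v \<in> Y}" using finM by simp
      ultimately show "\<exists>f. (\<forall>Y\<in>{Y\<in>M. v \<in> Y}. f Y = 1 \<or> f Y = (2::nat)) \<and> 3 dvd (\<Sum>Y\<in>{Y\<in>M. v \<in> Y}. f Y)"
        using coef_exists[of "{Y\<in>M. v \<in> Y}" Y1 Y2] by blast
    qed
    from bchoice[OF this] obtain F where F: "\<forall>v\<in>V'. (\<forall>Y\<in>{Y\<in>M. v \<in> Y}. F v Y = 1 \<or> F v Y = (2::nat)) \<and>
        3 dvd (\<Sum>Y\<in>{Y\<in>M. v \<in> Y}. F v Y)" by blast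
    define c where "c Y v = F v Y" for Y v
    have cunit: "\<forall>Y\<in>M. \<forall>v\<in>Y. c Y v = 1 \<or> c Y v = 2"
    proof (intro ballI)
      fix Y v assume "Y \<in> M" "v \<in> Y"
      moreover then have "v \<in> V'" using Mne by blast
      ultimately show "c Y v = 1 \<or> c Y v = 2" using F unfolding c_def by blast
    qed
    have csum: "\<forall>v\<in>V'. 3 dvd (\<Sum>Y\<in>{Y\<in>M. v \<in> Y}. c Y v)" using F unfolding c_def by blast
    have loc: "cex enc a V' M c Y0"
      by unfold_locales (fact enc a assms(2) finV finM Y0 Mne anti cunit csum)+
    note main = cex.cex_main[OF loc assms(3) cover real]
    note ltg' = ltg[unfolded local_to_global_def, rule_format]
    have "globally_consistent E (cex.Rc enc a V' M c Y0)"
      by (rule ltg') (use main in simp_all)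
    then show False using main by simp
  qed
qed


end
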